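(* Suppose all assumptions of the previous result hold, namely: (A1)–(A4); $P^\star\in\Pi_{K^\star}\setminus\Pi_{K^\star-1}$, $K^\star<\infty$; for every $\theta\in\Theta_\infty$, $H(P_\theta|P^\star)<\infty$ and $p_\theta\ell_\theta\in L^1(\mu)$; $\{\ell_\theta:\theta\in\Theta_\infty\}\subset\mathcal L_\tau(P^\star)$; for every $K$, every $Q\in\mathcal Q$ and every small $\varepsilon>0$ there is a finite $T\subset\Theta_K$ with $\sup_{\theta\in\Theta_K}\min_{t\in T}|Q\ell_\theta-Q\ell_t|\le\varepsilon$; $u-l\in\mathcal M_\tau(P^\star)$; and for every $K\le K^\star$, $\theta\mapsto\ell_\theta(z)$ is differentiable on the interior of $\Theta_K$ with derivative $\dot\ell_\theta$ whose coordinates lie in $\mathcal M_\tau(P^\star)$ and $|\ell_{\theta+h}-\ell_\theta-\dot\ell_\theta^Th|\le F\cdot o(h)$ for some $F\in\mathcal L_\tau(P^\star)$. Suppose moreover that $\Pi_{K^\star}$ is an exponential model: $\mathcal Z\subset\mathbb R^q$, $\mu$ is Lebesgue measure, and $p_\theta(z)=h(z)\exp(\theta^Tt(z)-\phi(\theta))$ for $\theta\in\Theta_{K^\star}$, where $t:\mathcal Z\to\mathbb R^{K^\star}$ and $h\ge0$ are measurable, $\phi(\theta)=\log\int h\,e^{\theta^Tt}d\mu$, and $\Theta_{K^\star}$ is a convex subset of the (open) natural parameter space $\{\theta\in\mathbb R^{K^\star}:\int h\,e^{\theta^Tt}d\mu<\infty\}$ (with $\Theta_K\subset\Theta_{K^\star}$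 for $K<K^\star$). Then $$\limsup_{n\to\infty}n^{-1}\log P^\star\{\widehat K_n^G<K^\star\}\le-H(\Pi_{K^\star-1}|P^\star).$$
   Context: Setting: $(\mathcal Z,\mathcal F)$ is a Polish space with its Borel $\sigma$-field and $\mu$ a $\sigma$-finite measure on it. $Z_1,Z_2,\dots$ are i.i.d. $\mathcal Z$-valued random variables with common law $P^\star\ll\mu$, density $p^\star$, $\ell^\star=\log p^\star$; $P^\star$ also denotes the law of the whole sequence. $\{(\Theta_K,d)\}_{K\ge1}$ is an increasing (nested) sequence of metric spaces (here subsets of Euclidean spaces with norm distance), $\Theta_\infty=\bigcup_K\Theta_K$; for $\theta\in\Theta_\infty$, $P_\theta$ is a probability measure with density $p_\theta$ w.r.t. $\mu$ and $\ell_\theta=\log p_\theta$. $\Pi_K=\{P_\theta:\theta\in\Theta_K\}$, $\Pi_0=\emptyset$. The order of $P^\star$ is $K^\star=\min\{K:P^\star\in\Pi_K\}$. $\lambda f=\int f\,d\lambda$. $H(P|Q)=\int\log(dP/dQ)\,dP$ if $P\ll Q$ and $+\infty$ otherwise; $H(\Pi|Q)=\inf_{P\in\Pi}H(P|Q)$. Given a penalty $\mathrm{pen}(n,K)>0$, $\mathrm{crit}(n,K)=\sup_{\theta\in\Theta_K}\sum_{i=1}^n\ell_\theta(Z_i)-\mathrm{pen}(n,K)$ and $\widehat K_n^G$ is the smallest maximizer of $K\mapsto\mathrm{crit}(n,K)$. All suprema are assumed measurable. Standing assumptions: (A1) each $(\Theta_K,d)$ is compact and each $\Pi_K$ is compact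 for the weak topology; (A2) for each $z$ and $K$, $\theta\mapsto\ell_\theta(z)$ is continuous on $\Theta_K$; (A3) there are $l,u:\mathcal Z\to\mathbb R$ with $u-l\in L^1(P^\star)$, $l\le\ell^\star\le u$ and $l\le\ell_\theta\le u$ for all $\theta\in\Theta_\infty$; (A4) for each $n$, $\mathrm{pen}(n,\cdot)$ is increasing, and for each $K$, $\mathrm{pen}(n,K)\to\infty$ and $\mathrm{pen}(n,K)=o(n)$ as $n\to\infty$. Large-deviation framework: $\tau(s)=e^{|s|}-|s|-1$. $\mathcal L_\tau(P^\star)=\{f:\mathcal Z\to\mathbb R:\exists a>0,\ P^\star\tau(f/a)<\infty\}$ and $\mathcal M_\tau(P^\star)=\{f:\forall a>0,\ P^\star\tau(f/a)<\infty\}$; $\mathcal L_\tau(P^\star)$ is a Banach space with the norm $\|f\|_\tau=\inf\{a>0:P^\star\tau(f/a)\le1\}$, and $\mathcal L'_\tau(P^\star)$ is its topological dual. $\mathcal P=\{p^{-1}\sum_{i=1}^p\delta_{z_i}:p\ge1,z_i\in\mathcal Z\}$. $\mathcal Q=\{Q\in\mathcal L'_\tau(P^\star):Q\ge0,\ Q1=1\}\cup\mathcal P$. *)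

theory Defs
  imports "HOL-Analysis.Analysis"
begin

text \<open>Parameters are represented as finitely supported vectors nat => real;
  a parameter of R^d is a function vanishing at all indices >= d.\<close>

definition fdist :: "(nat \<Rightarrow> real) \<Rightarrow> (nat \<Rightarrow> real) \<Rightarrow> real" where
  "fdist x y = sqrt (\<Sum>i\<in>{i. x i \<noteq> y i}. (x i - y i)^2)"

definition in_Rd :: "nat \<Rightarrow> (nat \<Rightarrow> real) \<Rightarrow> bool" where
  "in_Rd d x \<longleftrightarrow> (\<forall>i\<ge>d. x i = 0)"

definition fnorm :: "(nat \<Rightarrow> real) \<Rightarrow> real" where
  "fnorm x = fdist x (\<lambda>_. 0)"

definition fcompact :: "(nat \<Rightarrow> real) set \<Rightarrow> bool" where
  "fcompact S \<longleftrightarrow> (\<forall>x :: nat \<Rightarrow> nat \<Rightarrow> real. (\<forall>n. x n \<in> S) \<longrightarrow>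
     (\<exists>l\<in>S. \<exists>r. strict_mono r \<and> (\<lambda>n. fdist (x (r n)) l) \<longlonglongrightarrow> 0))"

definition fcontinuous_on :: "(nat \<Rightarrow> real) set \<Rightarrow> ((nat \<Rightarrow> real) \<Rightarrow> real) \<Rightarrow> bool" where
  "fcontinuous_on S g \<longleftrightarrow> (\<forall>x\<in>S. \<forall>e>0. \<exists>\<delta>>0. \<forall>y\<in>S. fdist x y < \<delta> \<longrightarrow> \<bar>g y - g x\<bar> < e)"

definition rinterior :: "nat \<Rightarrow> (nat \<Rightarrow> real) set \<Rightarrow> (nat \<Rightarrow> real) set" where
  "rinterior d S = {x\<in>S. \<exists>e>0. \<forall>y. in_Rd d y \<and> fdist x y < e \<longrightarrow> y \<in> S}"

definition fconvex :: "(nat \<Rightarrow> real) set \<Rightarrow> bool" where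
  "fconvex S \<longleftrightarrow> (\<forall>x\<in>S. \<forall>y\<in>S. \<forall>u::real. 0 \<le> u \<and> u \<le> 1 \<longrightarrow> (\<lambda>i. u * x i + (1 - u) * y i) \<in> S)"

definition weak_conv_on :: "'a::topological_space set \<Rightarrow> (nat \<Rightarrow> 'a measure) \<Rightarrow> 'a measure \<Rightarrow> bool" where
  "weak_conv_on Z Ms M \<longleftrightarrow> (\<forall>f :: 'a \<Rightarrow> real. continuous_on Z f \<and> bounded (f ` Z) \<longrightarrow>
      (\<lambda>n. integral\<^sup>L (Ms n) f) \<longlonglongrightarrow> integral\<^sup>L M f)"

definition weak_compact :: "'a::topological_space set \<Rightarrow> 'a measure set \<Rightarrow> bool" where
  "weak_compact Z S \<longleftrightarrow> (\<forall>Ms :: nat \<Rightarrow> 'a measure. (\<forall>n. Ms n \<in> S) \<longrightarrow>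
      (\<exists>M\<in>S. \<exists>r. strict_mono r \<and> weak_conv_on Z (Ms \<circ> r) M))"

definition relent :: "'a measure \<Rightarrow> 'a measure \<Rightarrow> ereal" where
  "relent P Q = (if sets P = sets Q \<and> absolutely_continuous Q P then
      enn2ereal (\<integral>\<^sup>+x. ennreal (max 0 (ln (enn2real (RN_deriv Q P x)))) \<partial>P)
    - enn2ereal (\<integral>\<^sup>+x. ennreal (max 0 (- ln (enn2real (RN_deriv Q P x)))) \<partial>P)
    else \<infinity>)"

definition tau :: "real \<Rightarrow> real" where
  "tau s = exp \<bar>s\<bar> - \<bar>s\<bar> - 1"

definition Ltau :: "'a measure \<Rightarrow> ('a \<Rightarrow> real) \<Rightarrow> bool" where
  "Ltau M f \<longleftrightarrow> f \<in> borel_measurable M \<and> (\<exists>a>0. (\<integral>\<^sup>+z. ennreal (tau (f z / a)) \<partial>M) < \<infinity>)"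

definition Mtau :: "'a measure \<Rightarrow> ('a \<Rightarrow> real) \<Rightarrow> bool" where
  "Mtau M f \<longleftrightarrow> f \<in> borel_measurable M \<and> (\<forall>a>0. (\<integral>\<^sup>+z. ennreal (tau (f z / a)) \<partial>M) < \<infinity>)"

definition tau_norm :: "'a measure \<Rightarrow> ('a \<Rightarrow> real) \<Rightarrow> real" where
  "tau_norm M f = Inf {a. a > 0 \<and> (\<integral>\<^sup>+z. ennreal (tau (f z / a)) \<partial>M) \<le> 1}"

text \<open>Elements Q of the topological dual of L_tau(M) with Q >= 0 and Q 1 = 1
  (functionals acting on representatives).\<close>
definition Ltau_dual_prob :: "'a measure \<Rightarrow> (('a \<Rightarrow> real) \<Rightarrow> real) \<Rightarrow> bool" where
  "Ltau_dual_prob M Q \<longleftrightarrow>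
     (\<forall>f g. Ltau M f \<and> Ltau M g \<longrightarrow> Q (\<lambda>z. f z + g z) = Q f + Q g) \<and>
     (\<forall>f c. Ltau M f \<longrightarrow> Q (\<lambda>z. c * f z) = c * Q f) \<and>
     (\<exists>C. \<forall>f. Ltau M f \<longrightarrow> \<bar>Q f\<bar> \<le> C * tau_norm M f) \<and>
     (\<forall>f. Ltau M f \<and> (AE z in M. 0 \<le> f z) \<longrightarrow> 0 \<le> Q f) \<and>
     Q (\<lambda>_. 1) = 1"

definition empirical :: "'a set \<Rightarrow> (('a \<Rightarrow> real) \<Rightarrow> real) \<Rightarrow> bool" where
  "empirical Z Q \<longleftrightarrow> (\<exists>m::nat. m \<ge> 1 \<and> (\<exists>zs. (\<forall>i<m. zs i \<in> Z) \<and>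
      (\<forall>f. Q f = (\<Sum>i<m. f (zs i)) / real m)))"

definition Qset :: "'a measure \<Rightarrow> 'a set \<Rightarrow> (('a \<Rightarrow> real) \<Rightarrow> real) set" where
  "Qset M Z = {Q. Ltau_dual_prob M Q} \<union> {Q. empirical Z Q}"

definition crit :: "(nat \<Rightarrow> (nat \<Rightarrow> real) set) \<Rightarrow> ((nat \<Rightarrow> real) \<Rightarrow> 'a \<Rightarrow> real)
    \<Rightarrow> (nat \<Rightarrow> nat \<Rightarrow> real) \<Rightarrow> nat \<Rightarrow> (nat \<Rightarrow> 'a) \<Rightarrow> nat \<Rightarrow> ereal" where
  "crit \<Theta> p pen n zs K = (SUP \<theta>\<in>\<Theta> K. ereal (\<Sum>i<n. ln (p \<theta> (zs i)))) - ereal (pen n K)"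

definition is_Khat :: "(nat \<Rightarrow> (nat \<Rightarrow> real) set) \<Rightarrow> ((nat \<Rightarrow> real) \<Rightarrow> 'a \<Rightarrow> real)
    \<Rightarrow> (nat \<Rightarrow> nat \<Rightarrow> real) \<Rightarrow> nat \<Rightarrow> (nat \<Rightarrow> 'a) \<Rightarrow> nat \<Rightarrow> bool" where
  "is_Khat \<Theta> p pen n zs K \<longleftrightarrow> 1 \<le> K \<and>
     (\<forall>K'\<ge>1. crit \<Theta> p pen n zs K' \<le> crit \<Theta> p pen n zs K) \<and>
     (\<forall>K'. 1 \<le> K' \<and> K' < K \<longrightarrow> crit \<Theta> p pen n zs K' < crit \<Theta> p pen n zs K)"

definition eln :: "real \<Rightarrow> ereal" where
  "eln x = (if x = 0 then -\<infinity> else ereal (ln x))"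

end

theory Submission
  imports Defs
begin

lemma fdist_Rd:
  assumes "in_Rd d x" "in_Rd d y"
  shows "fdist x y = sqrt (\<Sum>i<d. (x i - y i)^2)"
proof -
  have sub: "{i. x i \<noteq> y i} \<subseteq> {..<d}"
  proof
    fix i assume "i \<in> {i. x i \<noteq> y i}"
    then have xy: "x i \<noteq> y i" by simp
    show "i \<in> {..<d}"
    proof (rule ccontr)
      assume "i \<notin> {..<d}"
      then have "d \<le> i" by simp
      then show False using assms xy unfolding in_Rd_def by auto
    qed
  qed
  have "(\<Sum>i\<in>{i. x i \<noteq> y i}. (x i - y i)^2) = (\<Sum>i<d. (x i - y i)^2)"
    by (rule sum.mono_neutral_left) (use sub in auto)
  then show ?thesis unfolding fdist_def by simp
qed

lemma fdist_L2:
  assumes "in_Rd d x" "in_Rd d y"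
  shows "fdist x y = L2_set (\<lambda>i. x i - y i) {..<d}"
  using fdist_Rd[OF assms] by (simp add: L2_set_def)

lemma fdist_sym: "fdist x y = fdist y x"
proof -
  have "{i. x i \<noteq> y i} = {i. y i \<noteq> x i}" by auto
  then show ?thesis unfolding fdist_def by (simp add: power2_commute)
qed

lemma fdist_nonneg: "0 \<le> fdist x y"
  unfolding fdist_def by (auto intro: sum_nonneg)

lemma fdist_triangle:
  assumes "in_Rd d x" "in_Rd d y" "in_Rd d z"
  shows "fdist x z \<le> fdist x y + fdist y z"
proof -
  have "L2_set (\<lambda>i. x i - z i) {..<d} = L2_set (\<lambda>i. (x i - y i) + (y i - z i)) {..<d}" by simp
  also have "\<dots> \<le> L2_set (\<lambda>i. x i - y i) {..<d} + L2_set (\<lambda>i. y i - z i) {..<d}"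
    by (rule L2_set_triangle_ineq)
  finally show ?thesis using fdist_L2[OF assms(1,3)] fdist_L2[OF assms(1,2)] fdist_L2[OF assms(2,3)] by simp
qed

lemma coord_le_fdist:
  assumes "in_Rd d x" "in_Rd d y"
  shows "\<bar>x i - y i\<bar> \<le> fdist x y"
proof (cases "i < d")
  case True
  have "(x i - y i)^2 \<le> (\<Sum>j<d. (x j - y j)^2)"
    by (rule member_le_sum) (use True in auto)
  then have "sqrt ((x i - y i)^2) \<le> fdist x y"
    using fdist_Rd[OF assms] by (simp del: real_sqrt_abs)
  then show ?thesis by simp
next
  case False
  then show ?thesis using assms unfolding in_Rd_def by (simp add: fdist_nonneg)
qed

lemma fdist_cc:
  assumes "in_Rd d x" "in_Rd d y" "in_Rd d w" "0 \<le> s" "s \<le> 1"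
  shows "fdist (\<lambda>i. s * w i + (1 - s) * x i) (\<lambda>i. s * w i + (1 - s) * y i) \<le> fdist x y"
proof -
  have r1: "in_Rd d (\<lambda>i. s * w i + (1 - s) * x i)" "in_Rd d (\<lambda>i. s * w i + (1 - s) * y i)"
    using assms(1-3) unfolding in_Rd_def by auto
  have "(\<Sum>i<d. ((s * w i + (1 - s) * x i) - (s * w i + (1 - s) * y i))^2) \<le> (\<Sum>i<d. (x i - y i)^2)"
  proof (intro sum_mono)
    fix i
    have e: "(s * w i + (1 - s) * x i) - (s * w i + (1 - s) * y i) = (1 - s) * (x i - y i)"
      by (simp add: algebra_simps)
    have "(1 - s)^2 \<le> 1" using assms(4,5) by (simp add: power_le_one)
    then have "(1 - s)^2 * (x i - y i)^2 \<le> 1 * (x i - y i)^2" by (intro mult_right_mono) auto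
    then show "((s * w i + (1 - s) * x i) - (s * w i + (1 - s) * y i))^2 \<le> (x i - y i)^2"
      unfolding e by (simp add: power_mult_distrib)
  qed
  then show ?thesis using fdist_Rd[OF r1] fdist_Rd[OF assms(1,2)] by simp
qed

lemma sep_seq:
  fixes f :: "(nat \<Rightarrow> real) set \<Rightarrow> (nat \<Rightarrow> real)"
  assumes f: "\<And>T. finite T \<Longrightarrow> T \<subseteq> S \<Longrightarrow> f T \<in> S \<and> (\<forall>x\<in>T. \<epsilon> \<le> fdist x (f T))"
  shows "\<exists>xs. (\<forall>n::nat. xs n \<in> S) \<and> (\<forall>m n. (m::nat) < n \<longrightarrow> \<epsilon> \<le> fdist (xs m) (xs n))"
proof -
    define L where "L = rec_nat [] (\<lambda>n l. f (set l) # l)"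
    have L0: "L 0 = []" and LS: "L (Suc n) = f (set (L n)) # L n" for n
      by (simp_all add: L_def)
    have LS_sub: "set (L n) \<subseteq> S" for n
    proof (induction n)
      case 0 then show ?case by (simp add: L0)
    next
      case (Suc n) then show ?case using f[of "set (L n)"] by (simp add: LS)
    qed
    define xs where "xs n = f (set (L n))" for n
    have fn: "xs n \<in> S \<and> (\<forall>x\<in>set (L n). \<epsilon> \<le> fdist x (xs n))" for n
    proof -
      have "finite (set (L n))" by simp
      from f[OF this LS_sub[of n]] show ?thesis unfolding xs_def .
    qed
    have mono_L: "set (L m) \<subseteq> set (L n)" if "m \<le> n" for m n
      using that
    proof (induction n)
      case 0 then show ?case by simp
    next
      case (Suc n) then show ?case by (cases "m = Suc n") (auto simp: LS)
    qed
    have sep: "\<epsilon> \<le> fdist (xs m) (xs n)" if "m < n" for m n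
    proof -
      have "xs m \<in> set (L (Suc m))" by (simp add: LS xs_def)
      also have "\<dots> \<subseteq> set (L n)" using mono_L that by simp
      finally have "xs m \<in> set (L n)" .
      then show ?thesis using fn[of n] by blast
    qed
    have A: "(\<forall>n. xs n \<in> S) \<and> (\<forall>m n. m < n \<longrightarrow> \<epsilon> \<le> fdist (xs m) (xs n))" using fn sep by blast
    show ?thesis using A by blast
qed

lemma cover_lemma:
  fixes S :: "(nat \<Rightarrow> real) set"
  assumes comp: "fcompact S" and Rd: "\<forall>x\<in>S. in_Rd d x"
    and loc: "\<forall>x\<in>S. \<exists>r>0. G x r"
  shows "\<exists>T r. finite T \<and> T \<subseteq> S \<and> (\<forall>y\<in>T. 0 < r y \<and> G y (r y)) \<and>
           (\<forall>\<theta>\<in>S. \<exists>y\<in>T. fdist y \<theta> < r y)"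
proof -
  define r where "r x = (SOME \<rho>. \<rho> > 0 \<and> G x \<rho>)" for x
  have r: "r x > 0 \<and> G x (r x)" if "x \<in> S" for x
  proof -
    have "\<exists>\<rho>. \<rho> > 0 \<and> G x \<rho>" using loc that by blast
    then show ?thesis unfolding r_def by (rule someI_ex)
  qed
  have leb: "\<exists>\<epsilon>>0. \<forall>x\<in>S. \<exists>y\<in>S. fdist y x + \<epsilon> \<le> r y"
  proof (rule ccontr)
    assume na: "\<not> (\<exists>\<epsilon>>0. \<forall>x\<in>S. \<exists>y\<in>S. fdist y x + \<epsilon> \<le> r y)"
    have "\<forall>n::nat. \<exists>x\<in>S. \<forall>y\<in>S. fdist y x + 1 / (Suc n) > r y"
    proof
      fix n :: nat
      have "(1 / real (Suc n)) > 0" by simp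
      then have "\<not> (\<forall>x\<in>S. \<exists>y\<in>S. fdist y x + 1 / real (Suc n) \<le> r y)" using na by blast
      then show "\<exists>x\<in>S. \<forall>y\<in>S. fdist y x + 1 / (Suc n) > r y" by (auto simp: not_le)
    qed
    then have "\<exists>xs. \<forall>n. xs n \<in> S \<and> (\<forall>y\<in>S. fdist y (xs n) + 1 / (Suc n) > r y)"
      by (intro choice) blast
    then obtain xs where xs: "\<And>n. xs n \<in> S" "\<And>n y. y \<in> S \<Longrightarrow> fdist y (xs n) + 1 / (Suc n) > r y"
      by blast
    obtain l \<sigma> where l: "l \<in> S" "strict_mono \<sigma>" "(\<lambda>n. fdist (xs (\<sigma> n)) l) \<longlonglongrightarrow> 0"
      using comp xs(1) unfolding fcompact_def by blast
    have "(\<lambda>n. 1 / real (Suc (\<sigma> n))) \<longlonglongrightarrow> 0"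
    proof -
      have "(\<lambda>n. 1 / real (Suc n)) \<longlonglongrightarrow> 0" using LIMSEQ_inverse_real_of_nat by (simp add: inverse_eq_divide) 
      then show ?thesis using LIMSEQ_subseq_LIMSEQ[OF _ l(2)] by (simp add: o_def)
    qed
    then have "(\<lambda>n. fdist (xs (\<sigma> n)) l + 1 / real (Suc (\<sigma> n))) \<longlonglongrightarrow> 0 + 0"
      by (intro tendsto_add l(3))
    then have "eventually (\<lambda>n. fdist (xs (\<sigma> n)) l + 1 / real (Suc (\<sigma> n)) < r l) sequentially"
      using r[OF l(1)] by (intro order_tendstoD) auto
    then obtain N where "\<forall>n\<ge>N. fdist (xs (\<sigma> n)) l + 1 / real (Suc (\<sigma> n)) < r l"
      by (auto simp: eventually_sequentially)
    then have "fdist (xs (\<sigma> N)) l + 1 / real (Suc (\<sigma> N)) < r l" by simp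
    with xs(2)[OF l(1), of "\<sigma> N"] show False by (simp add: fdist_sym)
  qed
  then obtain \<epsilon> where eps: "\<epsilon> > 0" "\<forall>x\<in>S. \<exists>y\<in>S. fdist y x + \<epsilon> \<le> r y" by blast
  have tb: "\<exists>T. finite T \<and> T \<subseteq> S \<and> (\<forall>\<theta>\<in>S. \<exists>x\<in>T. fdist x \<theta> < \<epsilon>)"
  proof (rule ccontr)
    assume na: "\<not> (\<exists>T. finite T \<and> T \<subseteq> S \<and> (\<forall>\<theta>\<in>S. \<exists>x\<in>T. fdist x \<theta> < \<epsilon>))"
    have F: "\<forall>T. finite T \<and> T \<subseteq> S \<longrightarrow> (\<exists>\<theta>\<in>S. \<forall>x\<in>T. \<epsilon> \<le> fdist x \<theta>)"
      using na by (simp add: not_less)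
    define f where "f T = (SOME \<theta>. \<theta> \<in> S \<and> (\<forall>x\<in>T. \<epsilon> \<le> fdist x \<theta>))" for T
    have f: "f T \<in> S \<and> (\<forall>x\<in>T. \<epsilon> \<le> fdist x (f T))" if "finite T" "T \<subseteq> S" for T
    proof -
      have "\<exists>\<theta>. \<theta> \<in> S \<and> (\<forall>x\<in>T. \<epsilon> \<le> fdist x \<theta>)" using F that by blast
      then show ?thesis unfolding f_def by (rule someI_ex)
    qed
    obtain xs :: "nat \<Rightarrow> nat \<Rightarrow> real" where xsS: "\<And>n. xs n \<in> S" and sep: "\<And>m n. m < n \<Longrightarrow> \<epsilon> \<le> fdist (xs m) (xs n)"
    proof -
      have "\<exists>xs. (\<forall>n::nat. xs n \<in> S) \<and> (\<forall>m n. (m::nat) < n \<longrightarrow> \<epsilon> \<le> fdist (xs m) (xs n))"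
        by (rule sep_seq[where f=f]) (rule f)
      then obtain xs where "(\<forall>n::nat. xs n \<in> S) \<and> (\<forall>m n. (m::nat) < n \<longrightarrow> \<epsilon> \<le> fdist (xs m) (xs n))"
        by (elim exE)
      then show ?thesis using that by blast
    qed
    obtain l \<sigma> where l: "l \<in> S" "strict_mono \<sigma>" "(\<lambda>n. fdist (xs (\<sigma> n)) l) \<longlonglongrightarrow> 0"
      using comp xsS unfolding fcompact_def by blast
    have "eventually (\<lambda>n. fdist (xs (\<sigma> n)) l < \<epsilon>/2) sequentially"
      using eps(1) l(3) by (intro order_tendstoD) auto
    then obtain N where N: "\<And>n. n \<ge> N \<Longrightarrow> fdist (xs (\<sigma> n)) l < \<epsilon>/2"
      by (auto simp: eventually_sequentially)
    have "fdist (xs (\<sigma> N)) (xs (\<sigma> (Suc N))) \<le> fdist (xs (\<sigma> N)) l + fdist l (xs (\<sigma> (Suc N)))"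
      using Rd xsS l(1) by (intro fdist_triangle[of d]) auto
    also have "\<dots> < \<epsilon>" using N[of N] N[of "Suc N"] by (simp add: fdist_sym)
    finally show False using sep[of "\<sigma> N" "\<sigma> (Suc N)"] l(2) by (simp add: strict_mono_def)
  qed
  then obtain T0 where T0: "finite T0" "T0 \<subseteq> S" "\<forall>\<theta>\<in>S. \<exists>x\<in>T0. fdist x \<theta> < \<epsilon>" by blast
  define g where "g x = (SOME y. y \<in> S \<and> fdist y x + \<epsilon> \<le> r y)" for x
  have g: "g x \<in> S \<and> fdist (g x) x + \<epsilon> \<le> r (g x)" if "x \<in> S" for x
  proof -
    have "\<exists>y. y \<in> S \<and> fdist y x + \<epsilon> \<le> r y" using eps(2) that by blast
    then show ?thesis unfolding g_def by (rule someI_ex)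
  qed
  have c1: "\<forall>y\<in>g ` T0. 0 < r y \<and> G y (r y)" using T0 g r by auto
  have c2: "\<forall>\<theta>\<in>S. \<exists>y\<in>g ` T0. fdist y \<theta> < r y"
  proof
    fix \<theta> assume th: "\<theta> \<in> S"
    then obtain x where x: "x \<in> T0" "fdist x \<theta> < \<epsilon>" using T0 by blast
    have xS: "x \<in> S" using x T0 by auto
    have "fdist (g x) \<theta> \<le> fdist (g x) x + fdist x \<theta>"
      using Rd g[OF xS] xS th by (intro fdist_triangle[of d]) auto
    also have "\<dots> < r (g x)" using g[OF xS] x by simp
    finally show "\<exists>y\<in>g ` T0. fdist y \<theta> < r y" using x by blast
  qed
  have "finite (g ` T0) \<and> g ` T0 \<subseteq> S" using T0 g by auto
  then have "finite (g ` T0) \<and> g ` T0 \<subseteq> S \<and> (\<forall>y\<in>g ` T0. 0 < r y \<and> G y (r y)) \<and>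
           (\<forall>\<theta>\<in>S. \<exists>y\<in>g ` T0. fdist y \<theta> < r y)" using c1 c2 by blast
  then show ?thesis by (intro exI[where x="g ` T0"] exI[where x=r])
qed

lemma relent_density:
  fixes M :: "'a measure" and p1 q :: "'a \<Rightarrow> real"
  assumes p1m: "p1 \<in> borel_measurable M" and qm: "q \<in> borel_measurable M"
    and p1pos: "\<forall>z\<in>space M. 0 < p1 z" and qpos: "\<forall>z\<in>space M. 0 < q z"
    and p1int: "(\<integral>\<^sup>+z. ennreal (p1 z) \<partial>M) = 1" and qint: "(\<integral>\<^sup>+z. ennreal (q z) \<partial>M) = 1"
    and fin: "relent (density M p1) (density M q) < \<infinity>"
  shows "integrable M (\<lambda>z. p1 z * (ln (p1 z) - ln (q z)))"
    "relent (density M p1) (density M q) = ereal (\<integral>z. p1 z * (ln (p1 z) - ln (q z)) \<partial>M)"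
proof -
  define X where "X z = ln (p1 z) - ln (q z)" for z
  have Xm: "X \<in> borel_measurable M" unfolding X_def using p1m qm by measurable
  have ac: "absolutely_continuous (density M q) (density M p1)"
    unfolding absolutely_continuous_def
  proof
    fix A assume "A \<in> null_sets (density M q)"
    then have A: "A \<in> sets M" "AE x in M. x \<in> A \<longrightarrow> ennreal (q x) = 0"
      using null_sets_density_iff[of "\<lambda>x. ennreal (q x)" M] qm by auto
    have "AE x in M. x \<in> A \<longrightarrow> ennreal (p1 x) = 0"
      using A(2) AE_space
    proof eventually_elim
      case (elim x) then show ?case using qpos by auto
    qed
    then show "A \<in> null_sets (density M p1)" using null_sets_density_iff[of "\<lambda>x. ennreal (p1 x)" M] p1m A(1) by auto
  qed
  have spq: "emeasure (density M q) (space (density M q)) = 1"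
    using qm qint by (simp add: emeasure_density nn_integral_density)
  interpret Q: finite_measure "density M q"
    by (rule finite_measureI) (use spq in simp)
  have dd: "density (density M q) (\<lambda>x. ennreal (p1 x / q x)) = density M p1"
  proof -
    have "density (density M q) (\<lambda>x. ennreal (p1 x / q x)) = density M (\<lambda>x. ennreal (q x) * ennreal (p1 x / q x))"
      using qm p1m by (intro density_density_eq) auto
    also have "\<dots> = density M p1"
    proof (rule density_cong)
      show "AE x in M. ennreal (q x) * ennreal (p1 x / q x) = ennreal (p1 x)"
        using AE_space
      proof eventually_elim
        case (elim x)
        then have "0 < q x" "0 < p1 x" using qpos p1pos by auto
        then show ?case by (simp add: ennreal_mult''[symmetric])
      qed
    qed (use qm p1m in auto)
    finally show ?thesis .
  qed
  have RN: "AE x in density M q. ennreal (p1 x / q x) = RN_deriv (density M q) (density M p1) x"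
    by (rule Q.RN_deriv_unique) (use qm p1m dd in auto)
  have RN2: "AE x in density M p1. RN_deriv (density M q) (density M p1) x = ennreal (p1 x / q x)"
  proof -
    have "AE x in M. 0 < ennreal (q x) \<longrightarrow> ennreal (p1 x / q x) = RN_deriv (density M q) (density M p1) x"
      using RN qm by (simp add: AE_density)
    then have "AE x in M. 0 < ennreal (p1 x) \<longrightarrow> RN_deriv (density M q) (density M p1) x = ennreal (p1 x / q x)"
      using AE_space by eventually_elim (use qpos in auto)
    then show ?thesis using p1m by (simp add: AE_density)
  qed
  define Ip where "Ip = (\<integral>\<^sup>+z. ennreal (p1 z * max 0 (X z)) \<partial>M)"
  define In where "In = (\<integral>\<^sup>+z. ennreal (p1 z * max 0 (- X z)) \<partial>M)"
  have lnRN: "AE x in density M p1. ln (enn2real (RN_deriv (density M q) (density M p1) x)) = X x"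
    using RN2 AE_space
  proof eventually_elim
    case (elim x)
    then have "x \<in> space M" by simp
    then have "0 < q x" "0 < p1 x" using qpos p1pos by auto
    then show ?case using elim by (simp add: X_def ln_div)
  qed
  have eqp: "(\<integral>\<^sup>+x. ennreal (max 0 (ln (enn2real (RN_deriv (density M q) (density M p1) x)))) \<partial>density M p1) = Ip"
  proof -
    have "(\<integral>\<^sup>+x. ennreal (max 0 (ln (enn2real (RN_deriv (density M q) (density M p1) x)))) \<partial>density M p1)
        = (\<integral>\<^sup>+x. ennreal (max 0 (X x)) \<partial>density M p1)"
      by (rule nn_integral_cong_AE) (use lnRN in eventually_elim, auto)
    also have "\<dots> = (\<integral>\<^sup>+x. ennreal (p1 x) * ennreal (max 0 (X x)) \<partial>M)"
      using p1m Xm by (intro nn_integral_density) auto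
    also have "\<dots> = Ip" unfolding Ip_def
      by (intro nn_integral_cong) (simp add: ennreal_mult'')
    finally show ?thesis .
  qed
  have eqn: "(\<integral>\<^sup>+x. ennreal (max 0 (- ln (enn2real (RN_deriv (density M q) (density M p1) x)))) \<partial>density M p1) = In"
  proof -
    have "(\<integral>\<^sup>+x. ennreal (max 0 (- ln (enn2real (RN_deriv (density M q) (density M p1) x)))) \<partial>density M p1)
        = (\<integral>\<^sup>+x. ennreal (max 0 (- X x)) \<partial>density M p1)"
      by (rule nn_integral_cong_AE) (use lnRN in eventually_elim, auto)
    also have "\<dots> = (\<integral>\<^sup>+x. ennreal (p1 x) * ennreal (max 0 (- X x)) \<partial>M)"
      using p1m Xm by (intro nn_integral_density) auto
    also have "\<dots> = In" unfolding In_def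
      by (intro nn_integral_cong) (simp add: ennreal_mult'')
    finally show ?thesis .
  qed
  have rel: "relent (density M p1) (density M q) = enn2ereal Ip - enn2ereal In"
    unfolding relent_def using ac eqp eqn by simp
  have In_le: "In \<le> 1"
  proof -
    have "In \<le> (\<integral>\<^sup>+z. ennreal (q z) \<partial>M)" unfolding In_def
    proof (intro nn_integral_mono)
      fix z assume z: "z \<in> space M"
      then have pq: "0 < q z" "0 < p1 z" using qpos p1pos by auto
      have "p1 z * max 0 (- X z) \<le> q z"
      proof (cases "X z \<ge> 0")
        case True then show ?thesis using pq by simp
      next
        case False
        have "- X z = ln (q z / p1 z)" using pq by (simp add: X_def ln_div)
        also have "\<dots> \<le> q z / p1 z - 1" using pq by (intro ln_le_minus_one) simp
        finally have "p1 z * (- X z) \<le> p1 z * (q z / p1 z - 1)" using pq by (intro mult_left_mono) auto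
        also have "\<dots> = q z - p1 z" using pq by (simp add: field_simps)
        finally show ?thesis using False pq by simp
      qed
      then show "ennreal (p1 z * max 0 (- X z)) \<le> ennreal (q z)" by (rule ennreal_leI)
    qed
    then show ?thesis using qint by simp
  qed
  then have In_fin: "In < top" by (rule le_less_trans) simp
  have Ip_fin: "Ip < top"
  proof (rule ccontr)
    assume "\<not> Ip < top"
    then have "Ip = top" using less_top[of Ip] by blast
    then have "relent (density M p1) (density M q) = \<infinity>" using rel In_fin by simp
    then show False using fin by simp
  qed
  have pXm: "(\<lambda>z. p1 z * X z) \<in> borel_measurable M" using p1m Xm by measurable
  have normeq: "(\<integral>\<^sup>+z. ennreal (norm (p1 z * X z)) \<partial>M) = Ip + In"
  proof -
    have "(\<integral>\<^sup>+z. ennreal (norm (p1 z * X z)) \<partial>M) = (\<integral>\<^sup>+z. ennreal (p1 z * max 0 (X z)) + ennreal (p1 z * max 0 (- X z)) \<partial>M)"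
    proof (intro nn_integral_cong)
      fix z assume "z \<in> space M"
      then have "0 < p1 z" using p1pos by auto
      then show "ennreal (norm (p1 z * X z)) = ennreal (p1 z * max 0 (X z)) + ennreal (p1 z * max 0 (- X z))"
        by (cases "X z \<ge> 0") (auto simp: abs_mult)
    qed
    also have "\<dots> = Ip + In" unfolding Ip_def In_def
      using p1m Xm by (intro nn_integral_add) auto
    finally show ?thesis .
  qed
  show int: "integrable M (\<lambda>z. p1 z * (ln (p1 z) - ln (q z)))"
    unfolding X_def[symmetric]
    by (rule integrableI_bounded) (use pXm normeq Ip_fin In_fin in auto)
  have "(\<integral>z. p1 z * X z \<partial>M) = enn2real (\<integral>\<^sup>+z. ennreal (p1 z * X z) \<partial>M) - enn2real (\<integral>\<^sup>+z. ennreal (- (p1 z * X z)) \<partial>M)"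
    by (rule real_lebesgue_integral_def) (use int in \<open>simp add: X_def\<close>)
  also have "(\<integral>\<^sup>+z. ennreal (p1 z * X z) \<partial>M) = Ip" unfolding Ip_def
  proof (intro nn_integral_cong)
    fix z assume "z \<in> space M"
    then have "0 < p1 z" using p1pos by auto
    then show "ennreal (p1 z * X z) = ennreal (p1 z * max 0 (X z))"
    proof (cases "X z \<ge> 0")
      case False
      then have "p1 z * X z < 0" using \<open>0 < p1 z\<close> by (intro mult_pos_neg) auto
      then show ?thesis using False by (simp add: ennreal_neg)
    qed simp
  qed
  also have "(\<integral>\<^sup>+z. ennreal (- (p1 z * X z)) \<partial>M) = In" unfolding In_def
  proof (intro nn_integral_cong)
    fix z assume "z \<in> space M"
    then have "0 < p1 z" using p1pos by auto
    then show "ennreal (- (p1 z * X z)) = ennreal (p1 z * max 0 (- X z))"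
    proof (cases "X z \<ge> 0")
      case True
      then have "0 \<le> p1 z * X z" using \<open>0 < p1 z\<close> by simp
      then show ?thesis using True by (simp add: ennreal_neg)
    qed simp
  qed
  finally have ieq: "(\<integral>z. p1 z * X z \<partial>M) = enn2real Ip - enn2real In" .
  have "enn2ereal Ip = ereal (enn2real Ip)"
  proof -
    have e1: "ennreal (enn2real Ip) = Ip" using Ip_fin by simp
    have "enn2ereal (ennreal (enn2real Ip)) = ereal (enn2real Ip)" by (rule enn2ereal_ennreal) simp
    then show ?thesis unfolding e1 .
  qed
  moreover have "enn2ereal In = ereal (enn2real In)"
  proof -
    have e1: "ennreal (enn2real In) = In" using In_fin by simp
    have "enn2ereal (ennreal (enn2real In)) = ereal (enn2real In)" by (rule enn2ereal_ennreal) simp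
    then show ?thesis unfolding e1 .
  qed
  ultimately show "relent (density M p1) (density M q) = ereal (\<integral>z. p1 z * (ln (p1 z) - ln (q z)) \<partial>M)"
    using rel ieq unfolding X_def[symmetric] by simp
qed

lemma gs_bound:
  fixes s x :: real
  assumes s: "0 < s" "s \<le> 1"
  shows "\<bar>(1 - exp (- s * x)) / s\<bar> \<le> \<bar>x\<bar> + exp (- x)"
proof (cases "x \<ge> 0")
  case True
  have "exp (- s * x) \<le> 1" using True s by simp
  moreover have "1 - exp (- s * x) \<le> s * x"
    using exp_ge_add_one_self[of "- s * x"] by simp
  ultimately have "\<bar>(1 - exp (- s * x)) / s\<bar> = (1 - exp (- s * x)) / s" using s by simp
  also have "\<dots> \<le> s * x / s" using s \<open>1 - exp (- s * x) \<le> s * x\<close> by (intro divide_right_mono) auto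
  also have "\<dots> = x" using s by simp
  finally have "\<bar>(1 - exp (- s * x)) / s\<bar> \<le> x" .
  then show ?thesis using True exp_gt_zero[of "- x"] by linarith
next
  case False
  have "s * x \<le> 0" using False s by (simp add: mult_pos_neg less_imp_le)
  then have ge: "exp (- s * x) \<ge> 1" by simp
  have "exp ((1 - s) *\<^sub>R 0 + s *\<^sub>R (- x)) \<le> (1 - s) * exp 0 + s * exp (- x)"
    using s by (intro convex_onD[OF exp_convex]) auto
  then have cv: "exp (- s * x) - 1 \<le> s * (exp (- x) - 1)" by (simp add: algebra_simps)
  have le0: "(1 - exp (- s * x)) / s \<le> 0" using ge s by (intro divide_nonpos_pos) auto
  have "\<bar>(1 - exp (- s * x)) / s\<bar> = - ((1 - exp (- s * x)) / s)" using le0 by (rule abs_of_nonpos)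
  also have "\<dots> = (exp (- s * x) - 1) / s" by (simp add: minus_divide_left)
  also have "\<dots> \<le> s * (exp (- x) - 1) / s" using s cv by (intro divide_right_mono) auto
  also have "\<dots> = exp (- x) - 1" using s by simp
  finally show ?thesis by simp
qed

lemma gs_lim:
  fixes x :: real
  shows "(\<lambda>k. (1 - exp (- (1 / real (Suc k)) * x)) / (1 / real (Suc k))) \<longlonglongrightarrow> x"
proof (cases "x = 0")
  case True then show ?thesis by simp
next
  case False
  define z where "z = (\<lambda>k. - (1 / real (Suc k)) * x)"
  have z0: "z \<longlonglongrightarrow> 0"
  proof -
    have "(\<lambda>k. 1 / real (Suc k)) \<longlonglongrightarrow> 0" using LIMSEQ_inverse_real_of_nat by (simp add: inverse_eq_divide)
    then have "(\<lambda>k. - (1 / real (Suc k)) * x) \<longlonglongrightarrow> - 0 * x" by (intro tendsto_intros)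
    then show ?thesis by (simp add: z_def)
  qed
  have zne: "z k \<noteq> 0" for k using False by (simp add: z_def)
  have "filterlim z (at 0) sequentially"
    using z0 zne by (simp add: filterlim_at)
  then have lim1: "(\<lambda>k. (exp (z k) - 1) / z k) \<longlonglongrightarrow> 1"
    using lim_exp_minus_1 by (rule filterlim_compose[rotated])
  have eq: "(1 - exp (- (1 / real (Suc k)) * x)) / (1 / real (Suc k)) = x * ((exp (z k) - 1) / z k)" for k
    using False by (simp add: z_def field_simps)
  have "(\<lambda>k. x * ((exp (z k) - 1) / z k)) \<longlonglongrightarrow> x * 1" by (intro tendsto_intros lim1)
  then show ?thesis unfolding eq by simp
qed

lemma renyi_lower:
  fixes M :: "'a measure" and p1 q X :: "'a \<Rightarrow> real"
  assumes p1m: "p1 \<in> borel_measurable M" and qm: "q \<in> borel_measurable M" and Xm: "X \<in> borel_measurable M"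
    and p1pos: "\<forall>z\<in>space M. 0 < p1 z" and qeq: "\<forall>z\<in>space M. q z = p1 z * exp (- X z)"
    and p1int: "(\<integral>\<^sup>+z. ennreal (p1 z) \<partial>M) = 1" and qint: "(\<integral>\<^sup>+z. ennreal (q z) \<partial>M) = 1"
    and iX: "integrable M (\<lambda>z. p1 z * X z)" and gam: "0 < \<gamma>"
  shows "\<exists>s. 0 < s \<and> s \<le> 1 \<and> (\<forall>c. (\<integral>\<^sup>+z. ennreal (p1 z * exp (- s * X z)) \<partial>M) = ennreal (exp c)
             \<longrightarrow> (\<integral>z. p1 z * X z \<partial>M) - \<gamma> \<le> - c / s)"
proof -
  define sk where "sk k = 1 / real (Suc k)" for k
  have sk: "0 < sk k" "sk k \<le> 1" for k by (auto simp: sk_def)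
  define g where "g k z = p1 z * ((1 - exp (- sk k * X z)) / sk k)" for k z
  have ip1: "integrable M p1"
  proof (rule integrableI_bounded)
    show "p1 \<in> borel_measurable M" by fact
    have "(\<integral>\<^sup>+z. ennreal (norm (p1 z)) \<partial>M) = (\<integral>\<^sup>+z. ennreal (p1 z) \<partial>M)"
      by (intro nn_integral_cong) (use p1pos in \<open>auto\<close>)
    then show "(\<integral>\<^sup>+z. ennreal (norm (p1 z)) \<partial>M) < \<infinity>" using p1int by simp
  qed
  have iq: "integrable M q"
  proof (rule integrableI_bounded)
    show "q \<in> borel_measurable M" by fact
    have "(\<integral>\<^sup>+z. ennreal (norm (q z)) \<partial>M) = (\<integral>\<^sup>+z. ennreal (q z) \<partial>M)"
      by (intro nn_integral_cong) (use qeq p1pos in \<open>auto\<close>)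
    then show "(\<integral>\<^sup>+z. ennreal (norm (q z)) \<partial>M) < \<infinity>" using qint by simp
  qed
  have lim: "(\<lambda>k. integral\<^sup>L M (g k)) \<longlonglongrightarrow> (\<integral>z. p1 z * X z \<partial>M)"
  proof (rule integral_dominated_convergence[where w="\<lambda>z. p1 z * \<bar>X z\<bar> + q z"])
    show "(\<lambda>z. p1 z * X z) \<in> borel_measurable M" using p1m Xm by measurable
    show "g k \<in> borel_measurable M" for k unfolding g_def using p1m Xm by measurable
    show "integrable M (\<lambda>z. p1 z * \<bar>X z\<bar> + q z)"
    proof (intro Bochner_Integration.integrable_add iq)
      have "integrable M (\<lambda>z. \<bar>p1 z * X z\<bar>)" using iX by (rule integrable_abs)
      then show "integrable M (\<lambda>z. p1 z * \<bar>X z\<bar>)"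
        by (rule Bochner_Integration.integrable_cong[THEN iffD1, rotated -1]) (use p1pos in \<open>auto simp: abs_mult\<close>)
    qed
    show "AE z in M. (\<lambda>k. g k z) \<longlonglongrightarrow> p1 z * X z"
    proof (rule AE_I2)
      fix z
      have "(\<lambda>k. p1 z * ((1 - exp (- sk k * X z)) / sk k)) \<longlonglongrightarrow> p1 z * X z"
        unfolding sk_def by (intro tendsto_intros gs_lim)
      then show "(\<lambda>k. g k z) \<longlonglongrightarrow> p1 z * X z" by (simp add: g_def)
    qed
    show "AE z in M. norm (g k z) \<le> p1 z * \<bar>X z\<bar> + q z" for k
    proof (rule AE_I2)
      fix z assume z: "z \<in> space M"
      then have pz: "0 < p1 z" using p1pos by auto
      have "norm (g k z) = p1 z * \<bar>(1 - exp (- sk k * X z)) / sk k\<bar>"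
        using pz by (simp add: g_def abs_mult)
      also have "\<dots> \<le> p1 z * (\<bar>X z\<bar> + exp (- X z))"
        using pz gs_bound[OF sk(1) sk(2)] by (intro mult_left_mono) auto
      also have "\<dots> = p1 z * \<bar>X z\<bar> + q z" using qeq z by (simp add: algebra_simps)
      finally show "norm (g k z) \<le> p1 z * \<bar>X z\<bar> + q z" .
    qed
  qed
  have "eventually (\<lambda>k. (\<integral>z. p1 z * X z \<partial>M) - \<gamma> < integral\<^sup>L M (g k)) sequentially"
    using lim gam by (intro order_tendstoD) auto
  then obtain k where k: "(\<integral>z. p1 z * X z \<partial>M) - \<gamma> < integral\<^sup>L M (g k)"
    by (auto simp: eventually_sequentially)
  define s where "s = sk k"
  show ?thesis
  proof (intro exI[where x=s] conjI allI impI)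
    show "0 < s" "s \<le> 1" using sk by (auto simp: s_def)
    fix c assume c: "(\<integral>\<^sup>+z. ennreal (p1 z * exp (- s * X z)) \<partial>M) = ennreal (exp c)"
    have me: "(\<lambda>z. p1 z * exp (- s * X z)) \<in> borel_measurable M" using p1m Xm by measurable
    have ie: "integrable M (\<lambda>z. p1 z * exp (- s * X z))"
    proof (rule integrableI_bounded)
      show "(\<lambda>z. p1 z * exp (- s * X z)) \<in> borel_measurable M" by (rule me)
      have "(\<integral>\<^sup>+z. ennreal (norm (p1 z * exp (- s * X z))) \<partial>M) = (\<integral>\<^sup>+z. ennreal (p1 z * exp (- s * X z)) \<partial>M)"
        by (intro nn_integral_cong) (use p1pos in \<open>auto\<close>)
      then show "(\<integral>\<^sup>+z. ennreal (norm (p1 z * exp (- s * X z))) \<partial>M) < \<infinity>" using c by simp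
    qed
    have Ie: "(\<integral>z. p1 z * exp (- s * X z) \<partial>M) = exp c"
    proof -
      have "(\<integral>z. p1 z * exp (- s * X z) \<partial>M) = enn2real (\<integral>\<^sup>+z. ennreal (p1 z * exp (- s * X z)) \<partial>M)"
        by (rule integral_eq_nn_integral) (use me p1pos in \<open>auto intro!: AE_I2\<close>)
      then show ?thesis using c by simp
    qed
    have I1: "(\<integral>z. p1 z \<partial>M) = 1"
    proof -
      have "(\<integral>z. p1 z \<partial>M) = enn2real (\<integral>\<^sup>+z. ennreal (p1 z) \<partial>M)"
        by (rule integral_eq_nn_integral) (use p1m p1pos in \<open>auto intro!: AE_I2\<close>)
      then show ?thesis using p1int by simp
    qed
    have "integral\<^sup>L M (g k) = (\<integral>z. (p1 z - p1 z * exp (- s * X z)) / s \<partial>M)"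
      by (intro Bochner_Integration.integral_cong) (auto simp: g_def s_def algebra_simps diff_divide_distrib)
    also have "\<dots> = ((\<integral>z. p1 z \<partial>M) - (\<integral>z. p1 z * exp (- s * X z) \<partial>M)) / s"
      using ip1 ie by simp
    also have "\<dots> = (1 - exp c) / s" using I1 Ie by simp
    also have "\<dots> \<le> - c / s"
    proof (rule divide_right_mono)
      show "1 - exp c \<le> - c" using exp_ge_add_one_self[of c] by linarith
      show "0 \<le> s" using sk(1)[of k] by (simp add: s_def)
    qed
    finally show "(\<integral>z. p1 z * X z \<partial>M) - \<gamma> \<le> - c / s" using k by simp
  qed
qed

lemma exp_sum_le:
  fixes b :: "nat \<Rightarrow> real"
  assumes K: "1 \<le> K"
  shows "exp (\<Sum>i<K. b i) \<le> (\<Sum>i<K. exp (real K * b i))"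
proof -
  define m where "m = Max (b ` {..<K})"
  have "0 \<in> {..<K}" using K by simp
  then have ne: "b ` {..<K} \<noteq> {}" by blast
  have "m \<in> b ` {..<K}" unfolding m_def using ne by (intro Max_in) auto
  then obtain j where j: "j < K" "b j = m" by auto
  have bm: "b i \<le> m" if "i < K" for i unfolding m_def using that by (intro Max_ge) auto
  have "(\<Sum>i<K. b i) \<le> (\<Sum>i<K. m)" using bm by (intro sum_mono) auto
  also have "\<dots> = real K * b j" using j by simp
  finally have "exp (\<Sum>i<K. b i) \<le> exp (real K * b j)" by simp
  also have "\<dots> \<le> (\<Sum>i<K. exp (real K * b i))"
    using j by (intro member_le_sum[where f="\<lambda>i. exp (real K * b i)"]) auto
  finally show ?thesis .
qed

lemma ennreal_sum_lt_top:
  fixes f :: "'b \<Rightarrow> ennreal"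
  shows "finite A \<Longrightarrow> (\<And>i. i \<in> A \<Longrightarrow> f i < top) \<Longrightarrow> sum f A < top"
  by (induction A rule: finite_induct) auto

lemma moment_finite:
  fixes mu :: "'a measure" and hb p :: "'a \<Rightarrow> real" and t :: "'a \<Rightarrow> nat \<Rightarrow> real"
    and y c :: "nat \<Rightarrow> real"
  assumes K: "1 \<le> K" and hbm: "hb \<in> borel_measurable mu" and hbnn: "\<forall>z\<in>space mu. 0 \<le> hb z"
    and tm: "\<forall>i<K. (\<lambda>z. t z i) \<in> borel_measurable mu"
    and a: "0 < a"
    and pe: "\<forall>z\<in>space mu. p z = hb z * exp ((\<Sum>j<K. y j * t z j) - cst)"
    and fin1: "\<forall>i<K. (\<integral>\<^sup>+z. ennreal (hb z * exp (\<Sum>j<K. (y j + (if j = i then a else 0)) * t z j)) \<partial>mu) < \<infinity>"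
    and fin2: "\<forall>i<K. (\<integral>\<^sup>+z. ennreal (hb z * exp (\<Sum>j<K. (y j + (if j = i then - a else 0)) * t z j)) \<partial>mu) < \<infinity>"
  shows "(\<integral>\<^sup>+z. ennreal (p z * exp ((a / real K) * (\<Sum>i<K. \<bar>t z i - c i\<bar>))) \<partial>mu) < \<infinity>"
proof -
  define C where "C = exp ((a / real K) * (\<Sum>i<K. \<bar>c i\<bar>)) * exp (- cst)"
  define F where "F i s z = hb z * exp (\<Sum>j<K. (y j + (if j = i then s else 0)) * t z j)" for i s z
  have Fm: "(\<lambda>z. F i s z) \<in> borel_measurable mu" if "i < K" for i s
  proof -
    have "(\<lambda>z. \<Sum>j<K. (y j + (if j = i then s else 0)) * t z j) \<in> borel_measurable mu"
    proof (rule borel_measurable_sum)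
      fix j assume "j \<in> {..<K}"
      then have "(\<lambda>z. t z j) \<in> borel_measurable mu" using tm by simp
      then show "(\<lambda>z. (y j + (if j = i then s else 0)) * t z j) \<in> borel_measurable mu"
        by (intro borel_measurable_times borel_measurable_const)
    qed
    then have "(\<lambda>z. exp (\<Sum>j<K. (y j + (if j = i then s else 0)) * t z j)) \<in> borel_measurable mu"
      by (rule measurable_compose[OF _ borel_measurable_exp])
    then show ?thesis unfolding F_def using hbm by (intro borel_measurable_times)
  qed
  have shift: "(\<Sum>j<K. (y j + (if j = i then s else 0)) * t z j) = (\<Sum>j<K. y j * t z j) + s * t z i"
    if "i < K" for i s z
  proof -
    have "(\<Sum>j<K. (y j + (if j = i then s else 0)) * t z j) = (\<Sum>j<K. y j * t z j + (if j = i then s * t z j else 0))"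
      by (intro sum.cong) (auto simp: distrib_right)
    also have "\<dots> = (\<Sum>j<K. y j * t z j) + (\<Sum>j<K. (if j = i then s * t z j else 0))"
      by (rule sum.distrib)
    finally have 1: "(\<Sum>j<K. (y j + (if j = i then s else 0)) * t z j) = (\<Sum>j<K. y j * t z j) + (\<Sum>j<K. (if j = i then s * t z j else 0))" .
    have 2: "(\<Sum>j<K. (if j = i then s * t z j else 0)) = s * t z i" using that by (simp add: sum.delta)
    show ?thesis using 1 2 by simp
  qed
  have pw: "ennreal (p z * exp ((a / real K) * (\<Sum>i<K. \<bar>t z i - c i\<bar>)))
      \<le> ennreal C * (\<Sum>i<K. ennreal (F i a z) + ennreal (F i (- a) z))" if z: "z \<in> space mu" for z
  proof -
    have hz: "0 \<le> hb z" using hbnn z by auto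
    have pz: "p z = hb z * exp ((\<Sum>j<K. y j * t z j) - cst)" using pe z by auto
    have p0: "0 \<le> p z" using hz pz by simp
    have "(\<Sum>i<K. \<bar>t z i - c i\<bar>) \<le> (\<Sum>i<K. \<bar>t z i\<bar> + \<bar>c i\<bar>)"
      by (intro sum_mono) (rule abs_triangle_ineq4)
    then have W: "(\<Sum>i<K. \<bar>t z i - c i\<bar>) \<le> (\<Sum>i<K. \<bar>t z i\<bar>) + (\<Sum>i<K. \<bar>c i\<bar>)"
      by (simp only: sum.distrib)
    have aK: "0 \<le> a / real K" using a by simp
    define A where "A = (a / real K) * (\<Sum>i<K. \<bar>t z i\<bar>)"
    define B where "B = (a / real K) * (\<Sum>i<K. \<bar>c i\<bar>)"
    have e1: "exp ((a / real K) * (\<Sum>i<K. \<bar>t z i - c i\<bar>)) \<le> exp A * exp B"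
    proof -
      have "(a / real K) * (\<Sum>i<K. \<bar>t z i - c i\<bar>) \<le> A + B"
        using mult_left_mono[OF W aK] unfolding A_def B_def by (simp only: distrib_left)
      then have "exp ((a / real K) * (\<Sum>i<K. \<bar>t z i - c i\<bar>)) \<le> exp (A + B)" by simp
      then show ?thesis by (simp only: exp_add)
    qed
    have e2: "exp A \<le> (\<Sum>i<K. exp (a * t z i) + exp (- a * t z i))"
    proof -
      have "exp A = exp (\<Sum>i<K. (a / real K) * \<bar>t z i\<bar>)"
        unfolding A_def by (simp add: sum_distrib_left)
      also have "\<dots> \<le> (\<Sum>i<K. exp (real K * ((a / real K) * \<bar>t z i\<bar>)))" by (rule exp_sum_le[OF K])
      also have "\<dots> = (\<Sum>i<K. exp (a * \<bar>t z i\<bar>))" using K by simp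
      also have "\<dots> \<le> (\<Sum>i<K. exp (a * t z i) + exp (- a * t z i))"
      proof (intro sum_mono)
        fix i
        have p1: "0 < exp (a * t z i)" "0 < exp (- a * t z i)" by simp_all
        show "exp (a * \<bar>t z i\<bar>) \<le> exp (a * t z i) + exp (- a * t z i)"
        proof (cases "t z i \<ge> 0")
          case True then have "exp (a * \<bar>t z i\<bar>) = exp (a * t z i)" by simp
          then show ?thesis using p1 by linarith
        next
          case False then have "exp (a * \<bar>t z i\<bar>) = exp (- a * t z i)" by simp
          then show ?thesis using p1 by linarith
        qed
      qed
      finally show ?thesis .
    qed
    have key: "p z * exp (s * t z i) = exp (- cst) * F i s z" if "i < K" for i s
    proof -
      have "p z * exp (s * t z i) = hb z * (exp ((\<Sum>j<K. y j * t z j) - cst) * exp (s * t z i))"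
        using pz by simp
      also have "exp ((\<Sum>j<K. y j * t z j) - cst) * exp (s * t z i) = exp ((\<Sum>j<K. y j * t z j) - cst + s * t z i)"
        by (simp only: exp_add)
      also have "(\<Sum>j<K. y j * t z j) - cst + s * t z i = - cst + (\<Sum>j<K. (y j + (if j = i then s else 0)) * t z j)"
        using shift[OF that, of s z] by simp
      also have "exp (- cst + (\<Sum>j<K. (y j + (if j = i then s else 0)) * t z j)) = exp (- cst) * exp (\<Sum>j<K. (y j + (if j = i then s else 0)) * t z j)"
        by (simp only: exp_add)
      finally show ?thesis by (simp add: F_def)
    qed
    have sumeq: "p z * (\<Sum>i<K. exp (a * t z i) + exp (- a * t z i)) = exp (- cst) * (\<Sum>i<K. F i a z + F i (- a) z)"
    proof -
      have "p z * (\<Sum>i<K. exp (a * t z i) + exp (- a * t z i)) = (\<Sum>i<K. p z * exp (a * t z i) + p z * exp (- a * t z i))"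
        by (simp add: sum_distrib_left distrib_left)
      also have "\<dots> = (\<Sum>i<K. exp (- cst) * F i a z + exp (- cst) * F i (- a) z)"
      proof (intro sum.cong refl)
        fix i assume "i \<in> {..<K}"
        then have iK: "i < K" by simp
        show "p z * exp (a * t z i) + p z * exp (- a * t z i) = exp (- cst) * F i a z + exp (- cst) * F i (- a) z"
          by (simp only: key[OF iK])
      qed
      also have "\<dots> = exp (- cst) * (\<Sum>i<K. F i a z + F i (- a) z)"
        by (simp add: sum_distrib_left distrib_left)
      finally show ?thesis .
    qed
    have "p z * exp ((a / real K) * (\<Sum>i<K. \<bar>t z i - c i\<bar>)) \<le> p z * (exp A * exp B)"
      using e1 p0 by (rule mult_left_mono)
    also have "\<dots> \<le> p z * ((\<Sum>i<K. exp (a * t z i) + exp (- a * t z i)) * exp B)"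
      using e2 p0 by (intro mult_left_mono mult_right_mono) auto
    also have "\<dots> = (p z * (\<Sum>i<K. exp (a * t z i) + exp (- a * t z i))) * exp B"
      by (simp only: mult.assoc)
    also have "\<dots> = C * (\<Sum>i<K. F i a z + F i (- a) z)"
      unfolding sumeq C_def B_def by (simp only: mult_ac)
    finally have le: "p z * exp ((a / real K) * (\<Sum>i<K. \<bar>t z i - c i\<bar>)) \<le> C * (\<Sum>i<K. F i a z + F i (- a) z)" .
    have Fnn: "0 \<le> F i s z" for i s using hz by (simp add: F_def)
    have "ennreal (p z * exp ((a / real K) * (\<Sum>i<K. \<bar>t z i - c i\<bar>))) \<le> ennreal (C * (\<Sum>i<K. F i a z + F i (- a) z))"
      by (rule ennreal_leI[OF le])
    also have "\<dots> = ennreal C * ennreal (\<Sum>i<K. F i a z + F i (- a) z)"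
      by (rule ennreal_mult'') (intro sum_nonneg add_nonneg_nonneg Fnn)
    also have "ennreal (\<Sum>i<K. F i a z + F i (- a) z) = (\<Sum>i<K. ennreal (F i a z + F i (- a) z))"
      by (rule sum_ennreal[symmetric]) (intro add_nonneg_nonneg Fnn)
    also have "\<dots> = (\<Sum>i<K. ennreal (F i a z) + ennreal (F i (- a) z))"
      by (intro sum.cong refl ennreal_plus Fnn)
    finally show ?thesis .
  qed
  have "(\<integral>\<^sup>+z. ennreal (p z * exp ((a / real K) * (\<Sum>i<K. \<bar>t z i - c i\<bar>))) \<partial>mu)
      \<le> (\<integral>\<^sup>+z. ennreal C * (\<Sum>i<K. ennreal (F i a z) + ennreal (F i (- a) z)) \<partial>mu)"
    by (intro nn_integral_mono pw)
  also have "\<dots> = ennreal C * (\<Sum>i<K. (\<integral>\<^sup>+z. ennreal (F i a z) \<partial>mu) + (\<integral>\<^sup>+z. ennreal (F i (- a) z) \<partial>mu))"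
  proof -
    have "(\<integral>\<^sup>+z. ennreal C * (\<Sum>i<K. ennreal (F i a z) + ennreal (F i (- a) z)) \<partial>mu)
        = ennreal C * (\<integral>\<^sup>+z. (\<Sum>i<K. ennreal (F i a z) + ennreal (F i (- a) z)) \<partial>mu)"
      using Fm by (intro nn_integral_cmult) (auto intro!: borel_measurable_sum)
    also have "(\<integral>\<^sup>+z. (\<Sum>i<K. ennreal (F i a z) + ennreal (F i (- a) z)) \<partial>mu)
        = (\<Sum>i<K. (\<integral>\<^sup>+z. ennreal (F i a z) + ennreal (F i (- a) z) \<partial>mu))"
      using Fm by (intro nn_integral_sum) auto
    also have "\<dots> = (\<Sum>i<K. (\<integral>\<^sup>+z. ennreal (F i a z) \<partial>mu) + (\<integral>\<^sup>+z. ennreal (F i (- a) z) \<partial>mu))"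
      using Fm by (intro sum.cong refl nn_integral_add) auto
    finally show ?thesis .
  qed
  also have "\<dots> < \<infinity>"
  proof -
    have "(\<Sum>i<K. (\<integral>\<^sup>+z. ennreal (F i a z) \<partial>mu) + (\<integral>\<^sup>+z. ennreal (F i (- a) z) \<partial>mu)) < top"
    proof (rule ennreal_sum_lt_top)
      fix i assume "i \<in> {..<K}"
      then show "(\<integral>\<^sup>+z. ennreal (F i a z) \<partial>mu) + (\<integral>\<^sup>+z. ennreal (F i (- a) z) \<partial>mu) < top"
        using fin1 fin2 by (auto simp: F_def)
    qed simp
    then show ?thesis by (simp add: ennreal_mult_less_top)
  qed
  finally show ?thesis .
qed


lemma moment_shrink:
  fixes mu :: "'a measure" and p W :: "'a \<Rightarrow> real"
  assumes pm: "p \<in> borel_measurable mu" and Wm: "W \<in> borel_measurable mu"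
    and Wnn: "\<And>z. 0 \<le> W z" and pint: "(\<integral>\<^sup>+z. ennreal (p z) \<partial>mu) = 1"
    and r0: "0 < r0" and fin: "(\<integral>\<^sup>+z. ennreal (p z * exp (r0 * W z)) \<partial>mu) < \<infinity>"
    and T: "1 < T"
  shows "\<exists>r>0. r \<le> r0 \<and> (\<integral>\<^sup>+z. ennreal (p z * exp (r * W z)) \<partial>mu) < ennreal T"
proof -
  define rk where "rk k = r0 / real (Suc k)" for k
  define f where "f k z = ennreal (p z * exp (rk k * W z))" for k z
  have rk: "0 < rk k" "rk k \<le> r0" for k using r0 by (auto simp: rk_def field_simps)
  have rk_mono: "rk n \<le> rk m" if "m \<le> n" for m n
    using that r0 unfolding rk_def by (intro divide_left_mono) auto
  have decz: "f (Suc n) z \<le> f n z" for n z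
  proof -
    have e: "exp (rk (Suc n) * W z) \<le> exp (rk n * W z)"
      using rk_mono[of n "Suc n"] Wnn[of z] by (simp add: mult_right_mono)
    show "f (Suc n) z \<le> f n z"
    proof (cases "p z \<ge> 0")
      case True then show ?thesis unfolding f_def by (intro ennreal_leI mult_left_mono e) auto
    next
      case False
      then have "p z * exp (rk (Suc n) * W z) \<le> 0" by (simp add: mult_nonpos_nonneg)
      then show ?thesis unfolding f_def by (simp add: ennreal_neg)
    qed
  qed
  have dec: "decseq f" by (rule decseq_SucI, rule le_funI, rule decz)
  have fm: "f k \<in> borel_measurable mu" for k unfolding f_def using pm Wm by measurable
  have fin0: "(\<integral>\<^sup>+z. f 0 z \<partial>mu) < \<infinity>" using fin by (simp add: f_def rk_def)
  have INFf: "(INF k. f k z) = ennreal (p z)" for z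
  proof -
    have "decseq (\<lambda>k. f k z)" by (rule decseq_SucI) (rule decz)
    then have l1: "(\<lambda>k. f k z) \<longlonglongrightarrow> (INF k. f k z)" by (rule LIMSEQ_INF)
    have "(\<lambda>k. rk k) \<longlonglongrightarrow> 0"
    proof -
      have "(\<lambda>k. 1 / real (Suc k)) \<longlonglongrightarrow> 0" using LIMSEQ_inverse_real_of_nat by (simp add: inverse_eq_divide)
      then have "(\<lambda>k. r0 * (1 / real (Suc k))) \<longlonglongrightarrow> r0 * 0" by (intro tendsto_intros)
      then show ?thesis by (simp add: rk_def)
    qed
    then have "(\<lambda>k. p z * exp (rk k * W z)) \<longlonglongrightarrow> p z * exp (0 * W z)" by (intro tendsto_intros)
    then have "(\<lambda>k. f k z) \<longlonglongrightarrow> ennreal (p z)" unfolding f_def by (intro tendsto_ennrealI) simp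
    then show ?thesis using l1 LIMSEQ_unique by blast
  qed
  have "(\<integral>\<^sup>+z. (INF k. f k z) \<partial>mu) = (INF k. integral\<^sup>N mu (f k))"
    by (rule nn_integral_monotone_convergence_INF_decseq[OF dec fm fin0])
  then have "(INF k. integral\<^sup>N mu (f k)) = 1" using INFf pint by simp
  then have "(INF k. integral\<^sup>N mu (f k)) < ennreal T" using T by simp
  then obtain k where k: "integral\<^sup>N mu (f k) < ennreal T" by (auto simp: INF_less_iff)
  have "integral\<^sup>N mu (f k) = (\<integral>\<^sup>+z. ennreal (p z * exp (rk k * W z)) \<partial>mu)"
    by (intro nn_integral_cong) (simp add: f_def)
  then show ?thesis using k rk[of k] by (intro exI[where x="rk k"]) simp
qed

lemma markov_prod:
  fixes Pst :: "'a measure" and T :: "'b set" and Y :: "'b \<Rightarrow> 'a \<Rightarrow> real" and a :: "'b \<Rightarrow> real"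
    and E :: "(nat \<Rightarrow> 'a) set"
  assumes ps: "sigma_finite_measure Pst" and fT: "finite T"
    and Ym: "\<And>y. y \<in> T \<Longrightarrow> Y y \<in> borel_measurable Pst"
    and cov: "\<And>zs. zs \<in> E \<Longrightarrow> zs \<in> space (PiM {..<n} (\<lambda>_. Pst)) \<Longrightarrow> \<exists>y\<in>T. a y \<le> (\<Sum>k<n. Y y (zs k))"
  shows "emeasure (PiM {..<n} (\<lambda>_. Pst)) E \<le> (\<Sum>y\<in>T. ennreal (exp (- a y)) * (\<integral>\<^sup>+z. ennreal (exp (Y y z)) \<partial>Pst) ^ n)"
proof (cases "E \<in> sets (PiM {..<n} (\<lambda>_. Pst))")
  case False
  then show ?thesis by (simp add: emeasure_notin_sets)
next
  case True
  interpret PS: product_sigma_finite "\<lambda>_::nat. Pst"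
    unfolding product_sigma_finite_def using ps by simp
  define G where "G y zs = ennreal (exp (- a y)) * (\<Prod>k<n. ennreal (exp (Y y (zs k))))" for y zs
  have Gm: "G y \<in> borel_measurable (PiM {..<n} (\<lambda>_. Pst))" if "y \<in> T" for y
  proof -
    have "(\<lambda>zs. \<Prod>k<n. ennreal (exp (Y y (zs k)))) \<in> borel_measurable (PiM {..<n} (\<lambda>_. Pst))"
    proof (rule borel_measurable_prod_ennreal)
      fix k assume k: "k \<in> {..<n}"
      have "(\<lambda>zs. zs k) \<in> measurable (PiM {..<n} (\<lambda>_. Pst)) Pst"
        using k by (rule measurable_component_singleton)
      then have "(\<lambda>zs. Y y (zs k)) \<in> borel_measurable (PiM {..<n} (\<lambda>_. Pst))"
        using Ym[OF that] by (rule measurable_compose)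
      then show "(\<lambda>zs. ennreal (exp (Y y (zs k)))) \<in> borel_measurable (PiM {..<n} (\<lambda>_. Pst))"
        by measurable
    qed
    then show ?thesis unfolding G_def by measurable
  qed
  have "emeasure (PiM {..<n} (\<lambda>_. Pst)) E = (\<integral>\<^sup>+zs. indicator E zs \<partial>PiM {..<n} (\<lambda>_. Pst))"
    using True by simp
  also have "\<dots> \<le> (\<integral>\<^sup>+zs. (\<Sum>y\<in>T. G y zs) \<partial>PiM {..<n} (\<lambda>_. Pst))"
  proof (intro nn_integral_mono)
    fix zs assume sp: "zs \<in> space (PiM {..<n} (\<lambda>_. Pst))"
    show "indicator E zs \<le> (\<Sum>y\<in>T. G y zs)"
    proof (cases "zs \<in> E")
      case False then show ?thesis by simp
    next
      case True
      then obtain y where y: "y \<in> T" "a y \<le> (\<Sum>k<n. Y y (zs k))" using cov sp by blast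
      have "G y zs = ennreal (exp (- a y) * exp (\<Sum>k<n. Y y (zs k)))"
        unfolding G_def by (simp add: prod_ennreal exp_sum ennreal_mult'' prod_nonneg)
      also have "exp (- a y) * exp (\<Sum>k<n. Y y (zs k)) = exp (- a y + (\<Sum>k<n. Y y (zs k)))"
        by (simp only: exp_add)
      finally have "G y zs = ennreal (exp (- a y + (\<Sum>k<n. Y y (zs k))))" .
      moreover have "1 \<le> exp (- a y + (\<Sum>k<n. Y y (zs k)))" using y(2) by simp
      ultimately have "1 \<le> G y zs" by (simp add: ennreal_leI one_ennreal_def[symmetric])
      also have "G y zs \<le> (\<Sum>y\<in>T. G y zs)"
        using y(1) fT by (intro member_le_sum) auto
      finally show ?thesis using True by simp
    qed
  qed
  also have "\<dots> = (\<Sum>y\<in>T. (\<integral>\<^sup>+zs. G y zs \<partial>PiM {..<n} (\<lambda>_. Pst)))"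
    using Gm by (intro nn_integral_sum) auto
  also have "\<dots> = (\<Sum>y\<in>T. ennreal (exp (- a y)) * (\<integral>\<^sup>+z. ennreal (exp (Y y z)) \<partial>Pst) ^ n)"
  proof (intro sum.cong refl)
    fix y assume yT: "y \<in> T"
    have pm: "(\<lambda>zs. \<Prod>k<n. ennreal (exp (Y y (zs k)))) \<in> borel_measurable (PiM {..<n} (\<lambda>_. Pst))"
    proof (rule borel_measurable_prod_ennreal)
      fix k assume k: "k \<in> {..<n}"
      have "(\<lambda>zs. zs k) \<in> measurable (PiM {..<n} (\<lambda>_. Pst)) Pst"
        using k by (rule measurable_component_singleton)
      then have "(\<lambda>zs. Y y (zs k)) \<in> borel_measurable (PiM {..<n} (\<lambda>_. Pst))"
        using Ym[OF yT] by (rule measurable_compose)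
      then show "(\<lambda>zs. ennreal (exp (Y y (zs k)))) \<in> borel_measurable (PiM {..<n} (\<lambda>_. Pst))"
        by measurable
    qed
    have "(\<integral>\<^sup>+zs. G y zs \<partial>PiM {..<n} (\<lambda>_. Pst))
        = ennreal (exp (- a y)) * (\<integral>\<^sup>+zs. (\<Prod>k<n. ennreal (exp (Y y (zs k)))) \<partial>PiM {..<n} (\<lambda>_. Pst))"
      unfolding G_def using pm by (rule nn_integral_cmult)
    also have "(\<integral>\<^sup>+zs. (\<Prod>k<n. ennreal (exp (Y y (zs k)))) \<partial>PiM {..<n} (\<lambda>_. Pst))
        = (\<Prod>k<n. (\<integral>\<^sup>+z. ennreal (exp (Y y z)) \<partial>Pst))"
      using PS.product_nn_integral_prod[of "{..<n}" "\<lambda>_ z. ennreal (exp (Y y z))"] Ym[OF yT] by simp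
    also have "\<dots> = (\<integral>\<^sup>+z. ennreal (exp (Y y z)) \<partial>Pst) ^ n" by simp
    finally show "(\<integral>\<^sup>+zs. G y zs \<partial>PiM {..<n} (\<lambda>_. Pst)) = ennreal (exp (- a y)) * (\<integral>\<^sup>+z. ennreal (exp (Y y z)) \<partial>Pst) ^ n" .
  qed
  finally show ?thesis .
qed

theorem theorem9:
  fixes Zset :: "'a::euclidean_space set"
    and mu Pstar :: "'a measure"
    and pstar :: "'a \<Rightarrow> real"
    and \<Theta> :: "nat \<Rightarrow> (nat \<Rightarrow> real) set"
    and dim :: "nat \<Rightarrow> nat"
    and p :: "(nat \<Rightarrow> real) \<Rightarrow> 'a \<Rightarrow> real"
    and P :: "(nat \<Rightarrow> real) \<Rightarrow> 'a measure"
    and l u :: "'a \<Rightarrow> real"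
    and pen :: "nat \<Rightarrow> nat \<Rightarrow> real"
    and Kstar :: nat
    and t :: "'a \<Rightarrow> nat \<Rightarrow> real"
    and hb :: "'a \<Rightarrow> real"
    and phi :: "(nat \<Rightarrow> real) \<Rightarrow> real"
    and N :: "(nat \<Rightarrow> real) set"
  assumes Z_borel: "Zset \<in> sets borel"
    and Z_polish: "completely_metrizable_space (top_of_set Zset) \<and> separable_space (top_of_set Zset)"
    and mu_def: "mu = restrict_space lborel Zset"
    and pstar: "pstar \<in> borel_measurable mu" "\<forall>z\<in>Zset. 0 < pstar z"
      "(\<integral>\<^sup>+z. ennreal (pstar z) \<partial>mu) = 1"
    and Pstar_def: "Pstar = density mu (\<lambda>z. ennreal (pstar z))"
    and Theta0: "\<Theta> 0 = {}"
    and nested: "\<forall>K. \<Theta> K \<subseteq> \<Theta> (Suc K)"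
    and Theta_Rd: "\<forall>K. \<forall>\<theta>\<in>\<Theta> K. in_Rd (dim K) \<theta>"
    and dens: "\<forall>\<theta>\<in>(\<Union>K. \<Theta> K). p \<theta> \<in> borel_measurable mu \<and> (\<forall>z\<in>Zset. 0 < p \<theta> z)
                 \<and> (\<integral>\<^sup>+z. ennreal (p \<theta> z) \<partial>mu) = 1"
    and P_def: "\<forall>\<theta>. P \<theta> = density mu (\<lambda>z. ennreal (p \<theta> z))"
    and A1: "\<forall>K. fcompact (\<Theta> K) \<and> weak_compact Zset (P ` \<Theta> K)"
    and A2: "\<forall>K. \<forall>z\<in>Zset. fcontinuous_on (\<Theta> K) (\<lambda>\<theta>. ln (p \<theta> z))"
    and A3: "integrable Pstar (\<lambda>z. u z - l z)"
      "\<forall>z\<in>Zset. l z \<le> ln (pstar z) \<and> ln (pstar z) \<le> u z"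
      "\<forall>\<theta>\<in>(\<Union>K. \<Theta> K). \<forall>z\<in>Zset. l z \<le> ln (p \<theta> z) \<and> ln (p \<theta> z) \<le> u z"
    and A4: "\<forall>n K. 1 \<le> K \<longrightarrow> 0 < pen n K"
      "\<forall>n. mono_on {1..} (pen n)"
      "\<forall>K\<ge>1. filterlim (\<lambda>n. pen n K) at_top sequentially"
      "\<forall>K\<ge>1. (\<lambda>n. pen n K / real n) \<longlonglongrightarrow> 0"
    and Kstar: "1 \<le> Kstar" "Pstar \<in> P ` \<Theta> Kstar" "Pstar \<notin> P ` \<Theta> (Kstar - 1)"
    and H_fin: "\<forall>\<theta>\<in>(\<Union>K. \<Theta> K). relent (P \<theta>) Pstar < \<infinity>
                 \<and> integrable mu (\<lambda>z. p \<theta> z * ln (p \<theta> z))"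
    and l_Ltau: "\<forall>\<theta>\<in>(\<Union>K. \<Theta> K). Ltau Pstar (\<lambda>z. ln (p \<theta> z))"
    and cover: "\<forall>K. \<forall>Q\<in>Qset Pstar Zset. \<exists>\<epsilon>0>0. \<forall>\<epsilon>. 0 < \<epsilon> \<and> \<epsilon> \<le> \<epsilon>0 \<longrightarrow>
                 (\<exists>T. finite T \<and> T \<subseteq> \<Theta> K \<and>
                    (\<forall>\<theta>\<in>\<Theta> K. \<exists>s\<in>T. \<bar>Q (\<lambda>z. ln (p \<theta> z)) - Q (\<lambda>z. ln (p s z))\<bar> \<le> \<epsilon>))"
    and ul_Mtau: "Mtau Pstar (\<lambda>z. u z - l z)"
    and diff: "\<forall>K\<le>Kstar. \<forall>\<theta>\<in>rinterior (dim K) (\<Theta> K).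
                 \<exists>ldot :: 'a \<Rightarrow> nat \<Rightarrow> real. (\<forall>i<dim K. Mtau Pstar (\<lambda>z. ldot z i)) \<and>
                 (\<exists>F r \<delta>0. Ltau Pstar F \<and> \<delta>0 > 0 \<and>
                    (\<forall>e>0. \<exists>\<delta>>0. \<forall>h. in_Rd (dim K) h \<and> fnorm h < \<delta> \<longrightarrow> \<bar>r h\<bar> \<le> e * fnorm h) \<and>
                    (\<forall>h z. in_Rd (dim K) h \<and> fnorm h < \<delta>0 \<and> (\<lambda>i. \<theta> i + h i) \<in> \<Theta> K \<and> z \<in> Zset \<longrightarrow>
                       \<bar>ln (p (\<lambda>i. \<theta> i + h i) z) - ln (p \<theta> z) - (\<Sum>i<dim K. ldot z i * h i)\<bar>
                         \<le> F z * r h))"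
    and expo_meas: "hb \<in> borel_measurable mu" "\<forall>i<Kstar. (\<lambda>z. t z i) \<in> borel_measurable mu"
      "\<forall>z\<in>Zset. 0 \<le> hb z"
    and N_def: "N = {\<theta>. in_Rd Kstar \<theta> \<and>
                   (\<integral>\<^sup>+z. ennreal (hb z * exp (\<Sum>i<Kstar. \<theta> i * t z i)) \<partial>mu) < \<infinity>}"
    and N_open: "rinterior Kstar N = N"
    and phi_def: "\<forall>\<theta>. phi \<theta> = ln (\<integral>z. hb z * exp (\<Sum>i<Kstar. \<theta> i * t z i) \<partial>mu)"
    and dim_Kstar: "dim Kstar = Kstar"
    and Theta_N: "\<Theta> Kstar \<subseteq> N" "fconvex (\<Theta> Kstar)"
    and expo: "\<forall>\<theta>\<in>\<Theta> Kstar. \<forall>z\<in>Zset.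
                 p \<theta> z = hb z * exp ((\<Sum>i<Kstar. \<theta> i * t z i) - phi \<theta>)"
    and crit_meas: "\<forall>n K. (\<lambda>zs. crit \<Theta> p pen n zs K) \<in> borel_measurable (PiM {..<n} (\<lambda>_. Pstar))"
  shows "limsup (\<lambda>n. eln (measure (PiM {..<n} (\<lambda>_. Pstar))
              {zs \<in> space (PiM {..<n} (\<lambda>_. Pstar)). \<exists>K<Kstar. is_Khat \<Theta> p pen n zs K})
            * ereal (1 / real n))
         \<le> - (INF Q\<in>P ` \<Theta> (Kstar - 1). relent Q Pstar)"
proof -
  define L where "L \<theta> z = ln (p \<theta> z)" for \<theta> z
  define Pn where "Pn n = PiM {..<n} (\<lambda>_::nat. Pstar)" for n
  define E where "E n = {zs \<in> space (Pn n). \<exists>K<Kstar. is_Khat \<Theta> p pen n zs K}" for n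
  define S where "S = \<Theta> (Kstar - 1)"
  have spmu: "space mu = Zset" unfolding mu_def by (simp add: space_restrict_space)
  obtain ts where ts: "ts \<in> \<Theta> Kstar" "Pstar = P ts" using Kstar(2) by auto
  have Pst: "Pstar = density mu (\<lambda>z. ennreal (p ts z))" using ts P_def by simp
  have spP: "space Pstar = Zset" using Pst spmu by simp
  have Theta_mono: "\<Theta> K \<subseteq> \<Theta> K'" if "K \<le> K'" for K K'
  proof -
    have "\<And>n. \<Theta> n \<le> \<Theta> (Suc n)" using nested by blast
    from lift_Suc_mono_le[of \<Theta>, OF this that] show ?thesis by simp
  qed
  have SK: "S \<subseteq> \<Theta> Kstar" unfolding S_def by (rule Theta_mono) simp
  have densK: "p \<theta> \<in> borel_measurable mu \<and> (\<forall>z\<in>Zset. 0 < p \<theta> z) \<and> (\<integral>\<^sup>+z. ennreal (p \<theta> z) \<partial>mu) = 1"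
    if "\<theta> \<in> \<Theta> K" for \<theta> K
    using dens that by blast
  have Zne: "Zset \<noteq> {}"
  proof
    assume "Zset = {}"
    then have "(\<integral>\<^sup>+z. ennreal (pstar z) \<partial>mu) = 0" using spmu by (simp add: nn_integral_empty)
    then show False using pstar(3) by simp
  qed
  obtain z0 where z0: "z0 \<in> Zset" using Zne by blast
  have hbpos: "0 < hb z" if "z \<in> Zset" for z
  proof -
    have "0 < p ts z" using densK[OF ts(1)] that by blast
    then have "0 < hb z * exp ((\<Sum>i<Kstar. ts i * t z i) - phi ts)" using expo ts(1) that by simp
    then show ?thesis using expo_meas(3) that by (simp add: zero_less_mult_iff)
  qed
  have lnp: "L \<theta> z = ln (hb z) + (\<Sum>i<Kstar. \<theta> i * t z i) - phi \<theta>" if "\<theta> \<in> \<Theta> Kstar" "z \<in> Zset" for \<theta> z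
    using expo that hbpos[OF that(2)] by (simp add: L_def ln_mult)
  define cc where "cc \<theta> s = (\<lambda>i. s * ts i + (1 - s) * \<theta> i)" for \<theta> :: "nat \<Rightarrow> real" and s :: real
  have ccK: "cc \<theta> s \<in> \<Theta> Kstar" if "\<theta> \<in> \<Theta> Kstar" "0 \<le> s" "s \<le> 1" for \<theta> s
    using Theta_N(2) ts(1) that unfolding fconvex_def cc_def by blast
  define Cc where "Cc \<theta> s = (1 - s) * L \<theta> z0 + s * L ts z0 - L (cc \<theta> s) z0" for \<theta> s
  have Eid: "L (cc \<theta> s) z = (1 - s) * L \<theta> z + s * L ts z - Cc \<theta> s"
    if thK: "\<theta> \<in> \<Theta> Kstar" and s0: "0 \<le> s" and s1: "s \<le> 1" and z: "z \<in> Zset" for \<theta> s z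
  proof -
    have sumcc: "(\<Sum>i<Kstar. cc \<theta> s i * t w i) = s * (\<Sum>i<Kstar. ts i * t w i) + (1 - s) * (\<Sum>i<Kstar. \<theta> i * t w i)" for w
      unfolding cc_def by (simp add: distrib_right sum.distrib sum_distrib_left mult.assoc)
    have D: "L (cc \<theta> s) w - (1 - s) * L \<theta> w - s * L ts w = (1 - s) * phi \<theta> + s * phi ts - phi (cc \<theta> s)"
      if w: "w \<in> Zset" for w
    proof -
      have 1: "L (cc \<theta> s) w = ln (hb w) + (\<Sum>i<Kstar. cc \<theta> s i * t w i) - phi (cc \<theta> s)"
        using lnp[OF ccK[OF thK s0 s1] w] .
      have 2: "L \<theta> w = ln (hb w) + (\<Sum>i<Kstar. \<theta> i * t w i) - phi \<theta>" using lnp[OF thK w] .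
      have 3: "L ts w = ln (hb w) + (\<Sum>i<Kstar. ts i * t w i) - phi ts" using lnp[OF ts(1) w] .
      show ?thesis unfolding 1 2 3 sumcc by (simp add: algebra_simps)
    qed
    show ?thesis using D[OF z] D[OF z0] unfolding Cc_def by linarith
  qed
  have E2: "L \<theta> z - L y z = L \<theta> z0 - L y z0 + (\<Sum>i<Kstar. (\<theta> i - y i) * (t z i - t z0 i))"
    if "\<theta> \<in> \<Theta> Kstar" "y \<in> \<Theta> Kstar" "z \<in> Zset" for \<theta> y z
  proof -
    have "(\<Sum>i<Kstar. (\<theta> i - y i) * (t z i - t z0 i))
        = (\<Sum>i<Kstar. (\<theta> i * t z i - y i * t z i) - (\<theta> i * t z0 i - y i * t z0 i))"
      by (intro sum.cong) (auto simp: algebra_simps)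
    also have "\<dots> = ((\<Sum>i<Kstar. \<theta> i * t z i) - (\<Sum>i<Kstar. y i * t z i)) - ((\<Sum>i<Kstar. \<theta> i * t z0 i) - (\<Sum>i<Kstar. y i * t z0 i))"
      by (simp only: sum_subtractf)
    finally have s: "(\<Sum>i<Kstar. (\<theta> i - y i) * (t z i - t z0 i)) = ((\<Sum>i<Kstar. \<theta> i * t z i) - (\<Sum>i<Kstar. y i * t z i)) - ((\<Sum>i<Kstar. \<theta> i * t z0 i) - (\<Sum>i<Kstar. y i * t z0 i))" .
    show ?thesis using s lnp[OF that(1) that(3)] lnp[OF that(2) that(3)] lnp[OF that(1) z0] lnp[OF that(2) z0]
      by linarith
  qed
  have ev: "\<exists>\<theta>'\<in>S. \<forall>\<theta>''\<in>\<Theta> Kstar. (\<Sum>k<n. L \<theta>'' (zs k)) \<le> (\<Sum>k<n. L \<theta>' (zs k)) + pen n Kstar + 1"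
    if zsE: "zs \<in> E n" for n zs
  proof -
    from zsE obtain K where K: "K < Kstar" "is_Khat \<Theta> p pen n zs K" and sp: "zs \<in> space (Pn n)"
      unfolding E_def by auto
    have K1: "1 \<le> K" and cle: "crit \<Theta> p pen n zs Kstar \<le> crit \<Theta> p pen n zs K"
      using K(2) Kstar(1) unfolding is_Khat_def by auto
    have zsZ: "zs k \<in> Zset" if "k < n" for k
      using sp that unfolding Pn_def by (auto simp: space_PiM PiE_iff spP)
    define SU where "SU = (SUP \<theta>\<in>\<Theta> K. ereal (\<Sum>i<n. ln (p \<theta> (zs i))))"
    have critK: "crit \<Theta> p pen n zs K = SU - ereal (pen n K)" unfolding crit_def SU_def ..
    have critKs: "ereal (\<Sum>k<n. L \<theta>'' (zs k)) - ereal (pen n Kstar) \<le> crit \<Theta> p pen n zs Kstar"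
      if "\<theta>'' \<in> \<Theta> Kstar" for \<theta>''
    proof -
      have "ereal (\<Sum>k<n. L \<theta>'' (zs k)) \<le> (SUP \<theta>\<in>\<Theta> Kstar. ereal (\<Sum>i<n. ln (p \<theta> (zs i))))"
        unfolding L_def using that by (rule SUP_upper)
      then show ?thesis unfolding crit_def by (rule ereal_minus_mono) simp
    qed
    have SUub: "SU \<le> ereal (\<Sum>k<n. u (zs k))"
      unfolding SU_def
    proof (rule SUP_least)
      fix \<theta> assume "\<theta> \<in> \<Theta> K"
      then have "\<forall>z\<in>Zset. ln (p \<theta> z) \<le> u z" using A3(3) by blast
      then show "ereal (\<Sum>i<n. ln (p \<theta> (zs i))) \<le> ereal (\<Sum>k<n. u (zs k))"
        using zsZ by (auto intro!: sum_mono)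
    qed
    have SUlb: "ereal (\<Sum>k<n. L ts (zs k)) - ereal (pen n Kstar) \<le> SU - ereal (pen n K)"
      using critKs[OF ts(1)] cle critK by simp
    have SUne: "SU \<noteq> -\<infinity>"
    proof
      assume "SU = -\<infinity>"
      then show False using SUlb by simp
    qed
    have SUni: "SU \<noteq> \<infinity>" using SUub by auto
    have "\<Theta> K \<noteq> {}"
    proof
      assume "\<Theta> K = {}"
      then have "SU = -\<infinity>" unfolding SU_def by (simp add: bot_ereal_def)
      then show False using SUne by simp
    qed
    obtain \<sigma> where \<sigma>: "SU = ereal \<sigma>" using SUne SUni by (cases SU) auto
    have "\<exists>x\<in>(\<lambda>\<theta>. ereal (\<Sum>i<n. ln (p \<theta> (zs i)))) ` \<Theta> K. SU - 1 < x"
      unfolding SU_def by (rule Sup_ereal_close) (use SUne SUni \<open>\<Theta> K \<noteq> {}\<close> in \<open>auto simp: SU_def\<close>)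
    then obtain \<theta>' where th': "\<theta>' \<in> \<Theta> K" "SU - 1 < ereal (\<Sum>i<n. ln (p \<theta>' (zs i)))" by blast
    have "K \<le> Kstar - 1" using K(1) by simp
    then have th'S: "\<theta>' \<in> S" using th'(1) Theta_mono[of K "Kstar - 1"] unfolding S_def by blast
    show ?thesis
    proof (rule bexI[OF _ th'S], rule ballI)
      fix \<theta>'' assume th: "\<theta>'' \<in> \<Theta> Kstar"
      have "ereal (\<Sum>k<n. L \<theta>'' (zs k)) - ereal (pen n Kstar) \<le> crit \<Theta> p pen n zs Kstar"
        by (rule critKs[OF th])
      also have "\<dots> \<le> crit \<Theta> p pen n zs K" by (rule cle)
      also have "\<dots> = ereal \<sigma> - ereal (pen n K)" using critK \<sigma> by simp
      finally have "ereal (\<Sum>k<n. L \<theta>'' (zs k)) - ereal (pen n Kstar) \<le> ereal \<sigma> - ereal (pen n K)" .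
      then have a1: "(\<Sum>k<n. L \<theta>'' (zs k)) - pen n Kstar \<le> \<sigma> - pen n K" by simp
      have "ereal (\<sigma> - 1) < ereal (\<Sum>i<n. ln (p \<theta>' (zs i)))" using th'(2) \<sigma> by (simp add: one_ereal_def)
      then have a2: "\<sigma> - 1 < (\<Sum>k<n. L \<theta>' (zs k))" unfolding L_def by simp
      have a3: "0 < pen n K" using A4(1) K1 by blast
      show "(\<Sum>k<n. L \<theta>'' (zs k)) \<le> (\<Sum>k<n. L \<theta>' (zs k)) + pen n Kstar + 1" using a1 a2 a3 by linarith
    qed
  qed
  have main: "limsup (\<lambda>n. eln (measure (Pn n) (E n)) * ereal (1 / real n)) \<le> - (INF Q\<in>P ` S. relent Q Pstar)"
  proof (cases "S = {}")
    case True
    have Ee: "E n = {}" for n using ev True by blast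
    have "eventually (\<lambda>n. eln (measure (Pn n) (E n)) * ereal (1 / real n) \<le> -\<infinity>) sequentially"
      using eventually_ge_at_top[of "1::nat"]
    proof eventually_elim
      case (elim n) then show ?case using Ee[of n] by (simp add: eln_def)
    qed
    then have "limsup (\<lambda>n. eln (measure (Pn n) (E n)) * ereal (1 / real n)) \<le> -\<infinity>" by (rule Limsup_bounded)
    then show ?thesis by simp
  next
    case False
    define Hinf where "Hinf = (INF \<theta>\<in>S. relent (P \<theta>) Pstar)"
    have INFeq: "(INF Q\<in>P ` S. relent Q Pstar) = Hinf" unfolding Hinf_def by (simp add: image_image)
    have spPn: "space Pstar = space mu" using spP spmu by simp
    have relY: "integrable mu (\<lambda>z. p y z * (L y z - L ts z)) \<and>
        relent (P y) Pstar = ereal (\<integral>z. p y z * (L y z - L ts z) \<partial>mu)" if yS: "y \<in> S" for y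
    proof -
      have yK: "y \<in> \<Theta> Kstar" using yS SK by auto
      have fin: "relent (P y) Pstar < \<infinity>" using H_fin yK by blast
      have fin': "relent (density mu (\<lambda>z. ennreal (p y z))) (density mu (\<lambda>z. ennreal (p ts z))) < \<infinity>"
        using fin P_def Pst by simp
      have dy: "p y \<in> borel_measurable mu" "\<forall>z\<in>space mu. 0 < p y z" "(\<integral>\<^sup>+z. ennreal (p y z) \<partial>mu) = 1"
        using densK[OF yK] spmu by auto
      have dt: "p ts \<in> borel_measurable mu" "\<forall>z\<in>space mu. 0 < p ts z" "(\<integral>\<^sup>+z. ennreal (p ts z) \<partial>mu) = 1"
        using densK[OF ts(1)] spmu by auto
      note R = relent_density[OF dy(1) dt(1) dy(2) dt(2) dy(3) dt(3) fin']
      show ?thesis using R P_def Pst unfolding L_def by simp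
    qed
    have main2: "limsup (\<lambda>n. eln (measure (Pn n) (E n)) * ereal (1 / real n)) \<le> ereal (- R)"
      if R: "ereal R < Hinf" for R
    proof -
      obtain y0 where y0: "y0 \<in> S" using False by blast
      have "Hinf \<le> relent (P y0) Pstar" unfolding Hinf_def using y0 by (rule INF_lower)
      then have "Hinf < \<infinity>" using relY[OF y0] by auto
      then obtain h where h: "Hinf = ereal h" using R by (cases Hinf) auto
      have Rh: "R < h" using R h by simp
      define \<gamma> where "\<gamma> = (h - R) / 4"
      have gpos: "0 < \<gamma>" using Rh by (simp add: \<gamma>_def)
      have Ry_ge: "h \<le> (\<integral>z. p y z * (L y z - L ts z) \<partial>mu)" if "y \<in> S" for y
      proof -
        have "Hinf \<le> relent (P y) Pstar" unfolding Hinf_def using that by (rule INF_lower)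
        then show ?thesis using relY[OF that] h by simp
      qed
      define W where "W z = (\<Sum>i<Kstar. \<bar>t z i - t z0 i\<bar>)" for z
      have Wnn: "0 \<le> W z" for z unfolding W_def by (intro sum_nonneg) auto
      have Wm: "W \<in> borel_measurable mu"
      proof -
        have "(\<lambda>z. \<Sum>i<Kstar. \<bar>t z i - t z0 i\<bar>) \<in> borel_measurable mu"
        proof (rule borel_measurable_sum)
          fix i assume "i \<in> {..<Kstar}"
          then have "(\<lambda>z. t z i) \<in> borel_measurable mu" using expo_meas(2) by simp
          then show "(\<lambda>z. \<bar>t z i - t z0 i\<bar>) \<in> borel_measurable mu" by measurable
        qed
        then show ?thesis by (simp add: W_def[abs_def])
      qed
      have RdK: "in_Rd Kstar x" if "x \<in> \<Theta> Kstar" for x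
        using Theta_Rd that dim_Kstar by metis
      have Rd: "\<forall>x\<in>S. in_Rd Kstar x" using RdK SK by blast
      have tsRd: "in_Rd Kstar ts" using RdK ts(1) by blast
      define G where "G y r = (\<exists>s \<rho>m. 0 < s \<and> s \<le> 1 \<and> r \<le> \<rho>m \<and> 0 < \<rho>m \<and>
            (\<integral>\<^sup>+z. ennreal (p y z * exp (\<rho>m * W z)) \<partial>mu) < ennreal (exp (\<gamma> / 2)) \<and>
            (\<forall>\<theta>'\<in>S. fdist y \<theta>' < r \<longrightarrow> R + \<gamma> \<le> - Cc \<theta>' s / s - \<bar>L \<theta>' z0 - L y z0\<bar>))" for y r
      have loc: "\<forall>y\<in>S. \<exists>r>0. G y r"
      proof
        fix y assume yS: "y \<in> S"
        have yK: "y \<in> \<Theta> Kstar" using yS SK by auto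
        have dy: "p y \<in> borel_measurable mu" "\<forall>z\<in>space mu. 0 < p y z" "(\<integral>\<^sup>+z. ennreal (p y z) \<partial>mu) = 1"
          using densK[OF yK] spmu by auto
        have dt: "p ts \<in> borel_measurable mu" "\<forall>z\<in>space mu. 0 < p ts z" "(\<integral>\<^sup>+z. ennreal (p ts z) \<partial>mu) = 1"
          using densK[OF ts(1)] spmu by auto
        have Xm: "(\<lambda>z. L y z - L ts z) \<in> borel_measurable mu" unfolding L_def using dy(1) dt(1) by measurable
        have qeq: "\<forall>z\<in>space mu. p ts z = p y z * exp (- (L y z - L ts z))"
        proof
          fix z assume "z \<in> space mu"
          then have pp: "0 < p y z" "0 < p ts z" using dy(2) dt(2) by auto
          have "exp (- (L y z - L ts z)) = exp (L ts z) / exp (L y z)" by (simp add: exp_diff)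
          also have "\<dots> = p ts z / p y z" using pp by (simp add: L_def)
          finally show "p ts z = p y z * exp (- (L y z - L ts z))" using pp by simp
        qed
        obtain s where s: "0 < s" "s \<le> 1" and sc: "\<forall>c. (\<integral>\<^sup>+z. ennreal (p y z * exp (- s * (L y z - L ts z))) \<partial>mu) = ennreal (exp c)
             \<longrightarrow> (\<integral>z. p y z * (L y z - L ts z) \<partial>mu) - \<gamma> \<le> - c / s"
          using renyi_lower[OF dy(1) dt(1) Xm dy(2) qeq dy(3) dt(3) conjunct1[OF relY[OF yS]] gpos] by blast
        have ccyK: "cc y s \<in> \<Theta> Kstar" using ccK[OF yK] s by simp
        have CI: "(\<integral>\<^sup>+z. ennreal (p y z * exp (- s * (L y z - L ts z))) \<partial>mu) = ennreal (exp (Cc y s))"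
        proof -
          have dc: "p (cc y s) \<in> borel_measurable mu" "\<forall>z\<in>Zset. 0 < p (cc y s) z" "(\<integral>\<^sup>+z. ennreal (p (cc y s) z) \<partial>mu) = 1"
            using densK[OF ccyK] by auto
          have "(\<integral>\<^sup>+z. ennreal (p y z * exp (- s * (L y z - L ts z))) \<partial>mu)
              = (\<integral>\<^sup>+z. ennreal (exp (Cc y s)) * ennreal (p (cc y s) z) \<partial>mu)"
          proof (intro nn_integral_cong)
            fix z assume "z \<in> space mu"
            then have z: "z \<in> Zset" using spmu by simp
            have pos: "0 < p y z" "0 < p ts z" "0 < p (cc y s) z" using dy(2) dt(2) dc(2) z spmu by auto
            have "p (cc y s) z = exp (L (cc y s) z)" using pos by (simp add: L_def)
            also have "L (cc y s) z = (1 - s) * L y z + s * L ts z - Cc y s" using Eid[OF yK _ _ z] s by simp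
            also have "(1 - s) * L y z + s * L ts z - Cc y s = L y z + (- s * (L y z - L ts z)) + (- Cc y s)"
              by (simp add: algebra_simps)
            also have "exp (L y z + (- s * (L y z - L ts z)) + (- Cc y s)) = exp (L y z) * exp (- s * (L y z - L ts z)) * exp (- Cc y s)"
              by (simp only: exp_add)
            also have "exp (L y z) = p y z" using pos by (simp add: L_def)
            finally have fe: "p (cc y s) z = p y z * exp (- s * (L y z - L ts z)) * exp (- Cc y s)" .
            have e: "exp (- Cc y s) * exp (Cc y s) = 1" by (simp add: exp_minus)
            have "exp (Cc y s) * p (cc y s) z = p y z * exp (- s * (L y z - L ts z)) * (exp (- Cc y s) * exp (Cc y s))"
              unfolding fe by (simp only: mult_ac)
            then have fe2: "exp (Cc y s) * p (cc y s) z = p y z * exp (- s * (L y z - L ts z))" using e by simp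
            show "ennreal (p y z * exp (- s * (L y z - L ts z))) = ennreal (exp (Cc y s)) * ennreal (p (cc y s) z)"
              unfolding fe2[symmetric] using pos by (simp add: ennreal_mult)
          qed
          also have "\<dots> = ennreal (exp (Cc y s)) * (\<integral>\<^sup>+z. ennreal (p (cc y s) z) \<partial>mu)"
            using dc(1) by (intro nn_integral_cmult) measurable
          also have "\<dots> = ennreal (exp (Cc y s))" using dc(3) by simp
          finally show ?thesis .
        qed
        have Cy: "R + 3 * \<gamma> \<le> - Cc y s / s"
        proof -
          have I: "(\<integral>z. p y z * (L y z - L ts z) \<partial>mu) - \<gamma> \<le> - Cc y s / s" using sc CI by blast
          have "R + 3 * \<gamma> = h - \<gamma>" unfolding \<gamma>_def by (simp add: field_simps)
          also have "\<dots> \<le> (\<integral>z. p y z * (L y z - L ts z) \<partial>mu) - \<gamma>" using Ry_ge[OF yS] by simp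
          also have "\<dots> \<le> - Cc y s / s" by (rule I)
          finally show ?thesis .
        qed
        define e where "e = s * \<gamma> / 4"
        have epos: "0 < e" using s gpos by (simp add: e_def)
        have e4: "e \<le> \<gamma> / 4" using s gpos by (simp add: e_def mult_le_cancel_right1)
        have cont: "fcontinuous_on (\<Theta> Kstar) (\<lambda>\<theta>. ln (p \<theta> z0))" using A2 z0 by blast
        obtain \<delta>1 where \<delta>1: "0 < \<delta>1" "\<forall>\<theta>\<in>\<Theta> Kstar. fdist y \<theta> < \<delta>1 \<longrightarrow> \<bar>L \<theta> z0 - L y z0\<bar> < e"
          using cont yK epos unfolding fcontinuous_on_def L_def by blast
        obtain \<delta>2 where \<delta>2: "0 < \<delta>2" "\<forall>\<theta>\<in>\<Theta> Kstar. fdist (cc y s) \<theta> < \<delta>2 \<longrightarrow> \<bar>L \<theta> z0 - L (cc y s) z0\<bar> < e"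
          using cont ccyK epos unfolding fcontinuous_on_def L_def by blast
        have yN: "y \<in> rinterior Kstar N" using N_open Theta_N(1) yK by auto
        obtain ea where ea: "0 < ea" "\<forall>v. in_Rd Kstar v \<and> fdist y v < ea \<longrightarrow> v \<in> N"
          using yN unfolding rinterior_def by blast
        define a where "a = ea / 2"
        have apos: "0 < a" using ea(1) by (simp add: a_def)
        have yRd: "in_Rd Kstar y" using RdK yK by blast
        have finv: "(\<integral>\<^sup>+z. ennreal (hb z * exp (\<Sum>j<Kstar. (y j + (if j = i then \<sigma> else 0)) * t z j)) \<partial>mu) < \<infinity>"
          if iK: "i < Kstar" and sa: "\<bar>\<sigma>\<bar> = a" for i \<sigma>
        proof -
          define v where "v = (\<lambda>j. y j + (if j = i then \<sigma> else 0))"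
          have vRd: "in_Rd Kstar v" using yRd iK unfolding in_Rd_def v_def by auto
          have sne: "\<sigma> \<noteq> 0" using sa apos by auto
          have "{j. y j \<noteq> v j} = {i}" using sne unfolding v_def by auto
          then have "fdist y v = sqrt ((y i - v i)^2)" unfolding fdist_def by simp
          also have "\<dots> = a" using sa by (simp add: v_def)
          finally have "fdist y v < ea" using ea(1) by (simp add: a_def)
          then have "v \<in> N" using ea(2) vRd by blast
          then show ?thesis unfolding N_def v_def by simp
        qed
        have fin1: "\<forall>i<Kstar. (\<integral>\<^sup>+z. ennreal (hb z * exp (\<Sum>j<Kstar. (y j + (if j = i then a else 0)) * t z j)) \<partial>mu) < \<infinity>"
          using finv apos by auto
        have fin2: "\<forall>i<Kstar. (\<integral>\<^sup>+z. ennreal (hb z * exp (\<Sum>j<Kstar. (y j + (if j = i then - a else 0)) * t z j)) \<partial>mu) < \<infinity>"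
          using finv apos by auto
        have hbnn: "\<forall>z\<in>space mu. 0 \<le> hb z" using expo_meas(3) spmu by simp
        have pe: "\<forall>z\<in>space mu. p y z = hb z * exp ((\<Sum>j<Kstar. y j * t z j) - phi y)"
          using expo yK spmu by simp
        have mf: "(\<integral>\<^sup>+z. ennreal (p y z * exp ((a / real Kstar) * W z)) \<partial>mu) < \<infinity>"
          using moment_finite[where c="\<lambda>i. t z0 i" and cst="phi y", OF Kstar(1) expo_meas(1) hbnn expo_meas(2) apos pe fin1 fin2]
          by (simp add: W_def)
        have r0: "0 < a / real Kstar" using apos Kstar(1) by simp
        have T1: "1 < exp (\<gamma> / 2)" using gpos by simp
        obtain \<rho>m where \<rho>m: "0 < \<rho>m" "(\<integral>\<^sup>+z. ennreal (p y z * exp (\<rho>m * W z)) \<partial>mu) < ennreal (exp (\<gamma> / 2))"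
          using moment_shrink[OF dy(1) Wm Wnn dy(3) r0 mf T1] by blast
        show "\<exists>r>0. G y r"
        proof (intro exI[where x="min \<rho>m (min \<delta>1 \<delta>2)"] conjI)
          show "0 < min \<rho>m (min \<delta>1 \<delta>2)" using \<rho>m(1) \<delta>1(1) \<delta>2(1) by simp
          have good: "R + \<gamma> \<le> - Cc \<theta>' s / s - \<bar>L \<theta>' z0 - L y z0\<bar>"
            if th'S: "\<theta>' \<in> S" and d: "fdist y \<theta>' < min \<rho>m (min \<delta>1 \<delta>2)" for \<theta>'
          proof -
            have th'K: "\<theta>' \<in> \<Theta> Kstar" using th'S SK by auto
            have d1: "\<bar>L \<theta>' z0 - L y z0\<bar> < e" using \<delta>1(2) th'K d by auto
            have fd: "fdist (cc y s) (cc \<theta>' s) \<le> fdist y \<theta>'"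
              unfolding cc_def using fdist_cc[OF yRd RdK[OF th'K] tsRd] s by simp
            have ccK2: "cc \<theta>' s \<in> \<Theta> Kstar" using ccK[OF th'K] s by simp
            have "fdist (cc y s) (cc \<theta>' s) < \<delta>2" using fd d by simp
            then have d2: "\<bar>L (cc \<theta>' s) z0 - L (cc y s) z0\<bar> < e" using \<delta>2(2) ccK2 by blast
            have "Cc \<theta>' s - Cc y s = (1 - s) * (L \<theta>' z0 - L y z0) - (L (cc \<theta>' s) z0 - L (cc y s) z0)"
              unfolding Cc_def by (simp add: algebra_simps)
            then have "\<bar>Cc \<theta>' s - Cc y s\<bar> \<le> \<bar>(1 - s) * (L \<theta>' z0 - L y z0)\<bar> + \<bar>L (cc \<theta>' s) z0 - L (cc y s) z0\<bar>"
              by simp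
            also have "\<bar>(1 - s) * (L \<theta>' z0 - L y z0)\<bar> \<le> \<bar>L \<theta>' z0 - L y z0\<bar>"
            proof -
              have "\<bar>1 - s\<bar> \<le> 1" using s by simp
              then have "\<bar>1 - s\<bar> * \<bar>L \<theta>' z0 - L y z0\<bar> \<le> 1 * \<bar>L \<theta>' z0 - L y z0\<bar>" by (rule mult_right_mono) simp
              then show ?thesis by (simp add: abs_mult)
            qed
            finally have "\<bar>Cc \<theta>' s - Cc y s\<bar> \<le> 2 * e" using d1 d2 by linarith
            then have "\<bar>Cc \<theta>' s - Cc y s\<bar> \<le> (\<gamma> / 2) * s" by (simp add: e_def)
            then have q1: "\<bar>Cc \<theta>' s - Cc y s\<bar> / s \<le> \<gamma> / 2" using s(1) by (simp add: pos_divide_le_eq)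
            have "- Cc y s - \<bar>Cc \<theta>' s - Cc y s\<bar> \<le> - Cc \<theta>' s" by (cases "Cc \<theta>' s \<ge> Cc y s") auto
            then have "(- Cc y s - \<bar>Cc \<theta>' s - Cc y s\<bar>) / s \<le> - Cc \<theta>' s / s" using s(1) by (intro divide_right_mono) auto
            then have q2: "- Cc y s / s - \<bar>Cc \<theta>' s - Cc y s\<bar> / s \<le> - Cc \<theta>' s / s" by (simp add: diff_divide_distrib)
            show ?thesis using Cy q1 q2 d1 e4 by linarith
          qed
          show "G y (min \<rho>m (min \<delta>1 \<delta>2))" unfolding G_def
            using s \<rho>m good by (intro exI[where x=s] exI[where x=\<rho>m]) auto
        qed
      qed
      have compS: "fcompact S" using A1 unfolding S_def by blast
      obtain T r where T: "finite T" "T \<subseteq> S" "\<forall>y\<in>T. 0 < r y \<and> G y (r y)" "\<forall>\<theta>\<in>S. \<exists>y\<in>T. fdist y \<theta> < r y"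
        using cover_lemma[OF compS Rd loc] by blast
      define Q where "Q y s \<rho>m = (0 < s \<and> s \<le> 1 \<and> r y \<le> \<rho>m \<and> 0 < \<rho>m \<and>
            (\<integral>\<^sup>+z. ennreal (p y z * exp (\<rho>m * W z)) \<partial>mu) < ennreal (exp (\<gamma> / 2)) \<and>
            (\<forall>\<theta>'\<in>S. fdist y \<theta>' < r y \<longrightarrow> R + \<gamma> \<le> - Cc \<theta>' s / s - \<bar>L \<theta>' z0 - L y z0\<bar>))" for y s \<rho>m
      have "\<forall>y\<in>T. \<exists>s. \<exists>\<rho>m. Q y s \<rho>m" using T(3) unfolding G_def Q_def by blast
      from bchoice[OF this] obtain sf where sf1: "\<forall>y\<in>T. \<exists>\<rho>m. Q y (sf y) \<rho>m" ..
      from bchoice[OF sf1] obtain \<rho>f where Qf: "\<forall>y\<in>T. Q y (sf y) (\<rho>f y)" ..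
      have sf: "0 < sf y" "sf y \<le> 1" if "y \<in> T" for y using Qf that unfolding Q_def by auto
      have sfPst: "sigma_finite_measure Pstar"
      proof -
        have dt3: "(\<integral>\<^sup>+z. ennreal (p ts z) \<partial>mu) = 1" "p ts \<in> borel_measurable mu" using densK[OF ts(1)] by auto
        have "emeasure Pstar (space Pstar) = 1"
          unfolding Pst using dt3 by (simp add: emeasure_density nn_integral_density)
        then interpret F: finite_measure Pstar by (intro finite_measureI) simp
        show ?thesis by (rule F.sigma_finite_measure_axioms)
      qed
      define Y where "Y = (\<lambda>y z. L y z - L ts z + \<rho>f y * W z)"
      define aa where "aa n y = real n * (R + \<gamma>) - (pen n Kstar + 1) / sf y" for n y
      have Ym: "Y y \<in> borel_measurable Pstar" if yT: "y \<in> T" for y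
      proof -
        have yK: "y \<in> \<Theta> Kstar" using yT T(2) SK by auto
        have "(\<lambda>z. L y z - L ts z + \<rho>f y * W z) \<in> borel_measurable mu"
          unfolding L_def
          proof -
            have m1[measurable]: "p y \<in> borel_measurable mu" "p ts \<in> borel_measurable mu" using densK[OF yK] densK[OF ts(1)] by auto
            note Wm[measurable]
            show "(\<lambda>z. ln (p y z) - ln (p ts z) + \<rho>f y * W z) \<in> borel_measurable mu" by measurable
          qed
        then show ?thesis unfolding Pst Y_def by simp
      qed
      have mom: "(\<integral>\<^sup>+z. ennreal (exp (Y y z)) \<partial>Pstar) < ennreal (exp (\<gamma> / 2))" if yT: "y \<in> T" for y
      proof -
        have yK: "y \<in> \<Theta> Kstar" using yT T(2) SK by auto
        have Qy: "Q y (sf y) (\<rho>f y)" using Qf yT by blast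
        have ym: "(\<lambda>z. ennreal (exp (Y y z))) \<in> borel_measurable mu"
        proof -
          have "(\<lambda>z. L y z - L ts z + \<rho>f y * W z) \<in> borel_measurable mu"
            unfolding L_def
          proof -
            have m1[measurable]: "p y \<in> borel_measurable mu" "p ts \<in> borel_measurable mu" using densK[OF yK] densK[OF ts(1)] by auto
            note Wm[measurable]
            show "(\<lambda>z. ln (p y z) - ln (p ts z) + \<rho>f y * W z) \<in> borel_measurable mu" by measurable
          qed
          then show ?thesis unfolding Y_def by measurable
        qed
        have "(\<integral>\<^sup>+z. ennreal (exp (Y y z)) \<partial>Pstar) = (\<integral>\<^sup>+z. ennreal (p ts z) * ennreal (exp (Y y z)) \<partial>mu)"
          unfolding Pst using densK[OF ts(1)] ym by (intro nn_integral_density) auto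
        also have "\<dots> = (\<integral>\<^sup>+z. ennreal (p y z * exp (\<rho>f y * W z)) \<partial>mu)"
        proof (intro nn_integral_cong)
          fix z assume "z \<in> space mu"
          then have z: "z \<in> Zset" using spmu by simp
          have pos: "0 < p y z" "0 < p ts z" using densK[OF yK] densK[OF ts(1)] z by auto
          have "exp (Y y z) = exp (L y z) / exp (L ts z) * exp (\<rho>f y * W z)"
            unfolding Y_def by (simp add: exp_add exp_diff)
          also have "\<dots> = p y z / p ts z * exp (\<rho>f y * W z)" using pos by (simp add: L_def)
          finally have "p ts z * exp (Y y z) = p y z * exp (\<rho>f y * W z)" using pos by simp
          then show "ennreal (p ts z) * ennreal (exp (Y y z)) = ennreal (p y z * exp (\<rho>f y * W z))"
            using pos by (simp add: ennreal_mult[symmetric])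
        qed
        also have "\<dots> < ennreal (exp (\<gamma> / 2))" using Qy unfolding Q_def by blast
        finally show ?thesis .
      qed
      have cov: "\<exists>y\<in>T. aa n y \<le> (\<Sum>k<n. Y y (zs k))" if zsE: "zs \<in> E n" and zsp: "zs \<in> space (Pn n)" for n zs
      proof -
        obtain \<theta>' where th'S: "\<theta>' \<in> S"
          and th'P: "\<forall>\<theta>''\<in>\<Theta> Kstar. (\<Sum>k<n. L \<theta>'' (zs k)) \<le> (\<Sum>k<n. L \<theta>' (zs k)) + pen n Kstar + 1"
          using ev[OF zsE] by blast
        obtain y where yT: "y \<in> T" and dyt: "fdist y \<theta>' < r y" using T(4) th'S by blast
        have yS: "y \<in> S" using yT T(2) by auto
        have yK: "y \<in> \<Theta> Kstar" and th'K: "\<theta>' \<in> \<Theta> Kstar" using yS th'S SK by auto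
        have Qy: "Q y (sf y) (\<rho>f y)" using Qf yT by blast
        have s: "0 < sf y" "sf y \<le> 1" and r\<rho>: "r y \<le> \<rho>f y"
          and good: "R + \<gamma> \<le> - Cc \<theta>' (sf y) / sf y - \<bar>L \<theta>' z0 - L y z0\<bar>"
          using Qy th'S dyt unfolding Q_def by auto
        have zsZ: "zs k \<in> Zset" if "k < n" for k
          using zsp that unfolding Pn_def by (auto simp: space_PiM PiE_iff spP)
        have ccK': "cc \<theta>' (sf y) \<in> \<Theta> Kstar" using ccK[OF th'K] s by simp
        define A1 where "A1 = (\<Sum>k<n. L \<theta>' (zs k))"
        define A2 where "A2 = (\<Sum>k<n. L ts (zs k))"
        define c where "c = Cc \<theta>' (sf y)"
        have A: "(\<Sum>k<n. L (cc \<theta>' (sf y)) (zs k)) \<le> A1 + pen n Kstar + 1"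
          using th'P ccK' unfolding A1_def by blast
        have "(\<Sum>k<n. L (cc \<theta>' (sf y)) (zs k)) = (\<Sum>k<n. (1 - sf y) * L \<theta>' (zs k) + sf y * L ts (zs k) - c)"
          using Eid[OF th'K _ _ zsZ] s unfolding c_def by (intro sum.cong) auto
        also have "\<dots> = (1 - sf y) * A1 + sf y * A2 - real n * c"
          unfolding A1_def A2_def by (simp add: sum.distrib sum_subtractf sum_distrib_left)
        finally have B: "(\<Sum>k<n. L (cc \<theta>' (sf y)) (zs k)) = (1 - sf y) * A1 + sf y * A2 - real n * c" .
        have e1: "(1 - sf y) * A1 = A1 - sf y * A1" by (simp add: algebra_simps)
        have e2: "sf y * (A1 - A2) = sf y * A1 - sf y * A2" by (simp add: algebra_simps)
        have C: "- real n * c - (pen n Kstar + 1) \<le> sf y * (A1 - A2)" using A B e1 e2 by linarith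
        then have D: "(- real n * c - (pen n Kstar + 1)) / sf y \<le> A1 - A2"
          using s(1) by (simp add: pos_divide_le_eq mult.commute)
        have yRd: "in_Rd Kstar y" and th'Rd: "in_Rd Kstar \<theta>'" using RdK yK th'K by auto
        have pk: "L \<theta>' z - L ts z \<le> Y y z + \<bar>L \<theta>' z0 - L y z0\<bar>" if z: "z \<in> Zset" for z
        proof -
          have "(\<Sum>i<Kstar. (\<theta>' i - y i) * (t z i - t z0 i)) \<le> (\<Sum>i<Kstar. \<rho>f y * \<bar>t z i - t z0 i\<bar>)"
          proof (rule sum_mono)
            fix i
            have "\<bar>y i - \<theta>' i\<bar> \<le> fdist y \<theta>'" by (rule coord_le_fdist[OF yRd th'Rd])
            then have ci: "\<bar>\<theta>' i - y i\<bar> \<le> \<rho>f y" using dyt r\<rho> by (simp add: abs_minus_commute)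
            have "(\<theta>' i - y i) * (t z i - t z0 i) \<le> \<bar>\<theta>' i - y i\<bar> * \<bar>t z i - t z0 i\<bar>"
              by (simp add: abs_mult[symmetric])
            also have "\<dots> \<le> \<rho>f y * \<bar>t z i - t z0 i\<bar>" using ci by (intro mult_right_mono) auto
            finally show "(\<theta>' i - y i) * (t z i - t z0 i) \<le> \<rho>f y * \<bar>t z i - t z0 i\<bar>" .
          qed
          also have "\<dots> = \<rho>f y * W z" unfolding W_def by (simp add: sum_distrib_left)
          finally have "(\<Sum>i<Kstar. (\<theta>' i - y i) * (t z i - t z0 i)) \<le> \<rho>f y * W z" .
          then show ?thesis using E2[OF th'K yK z] unfolding Y_def by simp
        qed
        have "A1 - A2 = (\<Sum>k<n. L \<theta>' (zs k) - L ts (zs k))" unfolding A1_def A2_def by (simp add: sum_subtractf)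
        also have "\<dots> \<le> (\<Sum>k<n. Y y (zs k) + \<bar>L \<theta>' z0 - L y z0\<bar>)"
          using pk zsZ by (intro sum_mono) auto
        also have "\<dots> = (\<Sum>k<n. Y y (zs k)) + real n * \<bar>L \<theta>' z0 - L y z0\<bar>" by (simp add: sum.distrib)
        finally have F: "A1 - A2 \<le> (\<Sum>k<n. Y y (zs k)) + real n * \<bar>L \<theta>' z0 - L y z0\<bar>" .
        have G1: "(- real n * c - (pen n Kstar + 1)) / sf y = real n * (- c / sf y) - (pen n Kstar + 1) / sf y"
          by (simp add: diff_divide_distrib)
        have G2: "real n * (R + \<gamma>) \<le> real n * (- c / sf y - \<bar>L \<theta>' z0 - L y z0\<bar>)"
          using good unfolding c_def by (intro mult_left_mono) auto
        have "aa n y \<le> (\<Sum>k<n. Y y (zs k))"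
          using D F G1 G2 unfolding aa_def by (simp add: algebra_simps)
        then show ?thesis using yT by blast
      qed
      have mk: "emeasure (Pn n) (E n) \<le> (\<Sum>y\<in>T. ennreal (exp (- aa n y)) * (\<integral>\<^sup>+z. ennreal (exp (Y y z)) \<partial>Pstar) ^ n)" for n
      proof -
        have "emeasure (PiM {..<n} (\<lambda>_. Pstar)) (E n) \<le> (\<Sum>y\<in>T. ennreal (exp (- aa n y)) * (\<integral>\<^sup>+z. ennreal (exp (Y y z)) \<partial>Pstar) ^ n)"
        proof (rule markov_prod[where Y=Y and a="aa n"])
          show "sigma_finite_measure Pstar" by (rule sfPst)
          show "finite T" by (rule T(1))
          show "\<And>y. y \<in> T \<Longrightarrow> Y y \<in> borel_measurable Pstar" by (rule Ym)
          show "\<And>zs. zs \<in> E n \<Longrightarrow> zs \<in> space (PiM {..<n} (\<lambda>_. Pstar)) \<Longrightarrow> \<exists>y\<in>T. aa n y \<le> (\<Sum>k<n. Y y (zs k))"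
            using cov unfolding Pn_def by blast
        qed
        then show ?thesis unfolding Pn_def .
      qed
      have mb: "measure (Pn n) (E n) \<le> (\<Sum>y\<in>T. exp (- aa n y + real n * (\<gamma> / 2)))" for n
      proof -
        have "emeasure (Pn n) (E n) \<le> (\<Sum>y\<in>T. ennreal (exp (- aa n y)) * (\<integral>\<^sup>+z. ennreal (exp (Y y z)) \<partial>Pstar) ^ n)"
          by (rule mk)
        also have "\<dots> \<le> (\<Sum>y\<in>T. ennreal (exp (- aa n y)) * ennreal (exp (\<gamma> / 2)) ^ n)"
        proof (intro sum_mono mult_left_mono)
          fix y assume "y \<in> T"
          then have "(\<integral>\<^sup>+z. ennreal (exp (Y y z)) \<partial>Pstar) \<le> ennreal (exp (\<gamma> / 2))" using mom less_imp_le by blast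
          then show "(\<integral>\<^sup>+z. ennreal (exp (Y y z)) \<partial>Pstar) ^ n \<le> ennreal (exp (\<gamma> / 2)) ^ n" by (rule power_mono) simp
        qed simp
        also have "\<dots> = (\<Sum>y\<in>T. ennreal (exp (- aa n y + real n * (\<gamma> / 2))))"
        proof (intro sum.cong refl)
          fix y
          have "ennreal (exp (\<gamma> / 2)) ^ n = ennreal (exp (\<gamma> / 2) ^ n)" by (simp add: ennreal_power)
          also have "exp (\<gamma> / 2) ^ n = exp (real n * (\<gamma> / 2))" by (rule exp_of_nat_mult[symmetric])
          finally have "ennreal (exp (- aa n y)) * ennreal (exp (\<gamma> / 2)) ^ n = ennreal (exp (- aa n y) * exp (real n * (\<gamma> / 2)))"
            by (simp add: ennreal_mult)
          also have "exp (- aa n y) * exp (real n * (\<gamma> / 2)) = exp (- aa n y + real n * (\<gamma> / 2))" by (simp only: exp_add)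
          finally show "ennreal (exp (- aa n y)) * ennreal (exp (\<gamma> / 2)) ^ n = ennreal (exp (- aa n y + real n * (\<gamma> / 2)))" .
        qed
        also have "\<dots> = ennreal (\<Sum>y\<in>T. exp (- aa n y + real n * (\<gamma> / 2)))"
          by (rule sum_ennreal) simp
        finally have "emeasure (Pn n) (E n) \<le> ennreal (\<Sum>y\<in>T. exp (- aa n y + real n * (\<gamma> / 2)))" .
        then show ?thesis unfolding measure_def by (intro enn2real_leI) (auto intro: sum_nonneg)
      qed
      have evA: "eventually (\<lambda>n. \<forall>y\<in>T. (pen n Kstar + 1) / sf y \<le> real n * \<gamma> / 4) sequentially"
      proof (rule eventually_ball_finite[OF T(1)], rule ballI)
        fix y assume yT: "y \<in> T"
        have s0: "0 < sf y" using sf[OF yT] by simp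
        have l1: "(\<lambda>n. pen n Kstar / real n) \<longlonglongrightarrow> 0" using A4(4) Kstar(1) by blast
        have l2: "(\<lambda>n. 1 / real n) \<longlonglongrightarrow> 0" by (rule lim_1_over_n)
        have "(\<lambda>n. (pen n Kstar / real n + 1 / real n) / sf y) \<longlonglongrightarrow> (0 + 0) / sf y"
          using s0 by (intro tendsto_intros l1 l2) auto
        then have "eventually (\<lambda>n. (pen n Kstar / real n + 1 / real n) / sf y < \<gamma> / 4) sequentially"
          using gpos by (intro order_tendstoD) auto
        then show "eventually (\<lambda>n. (pen n Kstar + 1) / sf y \<le> real n * \<gamma> / 4) sequentially"
          using eventually_ge_at_top[of "1::nat"]
        proof eventually_elim
          case (elim n)
          have np: "0 < real n" using elim(2) by simp
          have "(pen n Kstar + 1) / sf y = real n * ((pen n Kstar / real n + 1 / real n) / sf y)"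
            using np s0 by (simp add: field_simps)
          also have "\<dots> \<le> real n * (\<gamma> / 4)" using elim(1) np by (intro mult_left_mono) auto
          finally show ?case by simp
        qed
      qed
      obtain N0 :: nat where N0: "real (card T) * 4 / \<gamma> \<le> real N0" using real_arch_simple by blast
      have evB: "eventually (\<lambda>n. real (card T) \<le> exp (real n * \<gamma> / 4)) sequentially"
        using eventually_ge_at_top[of N0]
      proof eventually_elim
        case (elim n)
        have "real N0 \<le> real n" using elim by simp
        then have "real (card T) * 4 / \<gamma> \<le> real n" using N0 by linarith
        then have "real (card T) * 4 \<le> real n * \<gamma>" using gpos by (simp add: pos_divide_le_eq)
        then have "real (card T) \<le> real n * \<gamma> / 4" by simp
        also have "\<dots> \<le> exp (real n * \<gamma> / 4)" using exp_ge_add_one_self[of "real n * \<gamma> / 4"] by linarith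
        finally show ?case .
      qed
      have "eventually (\<lambda>n. eln (measure (Pn n) (E n)) * ereal (1 / real n) \<le> ereal (- R)) sequentially"
        using evA evB eventually_ge_at_top[of "1::nat"]
      proof eventually_elim
        case (elim n)
        define m where "m = measure (Pn n) (E n)"
        have np: "0 < real n" using elim(3) by simp
        have "m \<le> (\<Sum>y\<in>T. exp (- aa n y + real n * (\<gamma> / 2)))" unfolding m_def by (rule mb)
        also have "\<dots> \<le> (\<Sum>y\<in>T. exp (- real n * R - real n * \<gamma> / 4))"
        proof (rule sum_mono)
          fix y assume yT: "y \<in> T"
          have X: "(pen n Kstar + 1) / sf y \<le> real n * \<gamma> / 4" using elim(1) yT by blast
          have e1: "real n * (R + \<gamma>) = real n * R + real n * \<gamma>" by (simp add: algebra_simps)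
          have e2: "real n * (\<gamma> / 2) = real n * \<gamma> / 2" by simp
          have "- aa n y + real n * (\<gamma> / 2) \<le> - real n * R - real n * \<gamma> / 4"
            unfolding aa_def using X e1 e2 by linarith
          then show "exp (- aa n y + real n * (\<gamma> / 2)) \<le> exp (- real n * R - real n * \<gamma> / 4)" by simp
        qed
        also have "\<dots> = real (card T) * exp (- real n * R - real n * \<gamma> / 4)" by simp
        also have "\<dots> \<le> exp (real n * \<gamma> / 4) * exp (- real n * R - real n * \<gamma> / 4)"
          using elim(2) by (intro mult_right_mono) auto
        also have "\<dots> = exp (- real n * R)" by (simp flip: exp_add)
        finally have m1: "m \<le> exp (- real n * R)" .
        show ?case
        proof (cases "m = 0")
          case True
          then show ?thesis using np unfolding m_def by (simp add: eln_def)
        next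
          case False
          have mpos: "0 < m" using False measure_nonneg[of "Pn n" "E n"] unfolding m_def by linarith
          have "ln m \<le> ln (exp (- real n * R))" using m1 mpos by (subst ln_le_cancel_iff) auto
          then have lm: "ln m \<le> - real n * R" by simp
          have "ln m * (1 / real n) \<le> (- real n * R) * (1 / real n)" using lm np by (intro mult_right_mono) auto
          also have "\<dots> = - R" using np by simp
          finally have "ln m * (1 / real n) \<le> - R" .
          then show ?thesis using False unfolding m_def[symmetric] by (simp add: eln_def)
        qed
      qed
      then show ?thesis by (rule Limsup_bounded)
    qed
    have "Hinf \<le> - limsup (\<lambda>n. eln (measure (Pn n) (E n)) * ereal (1 / real n))"
    proof (rule dense_le)
      fix x assume x: "x < Hinf"
      show "x \<le> - limsup (\<lambda>n. eln (measure (Pn n) (E n)) * ereal (1 / real n))"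
      proof (cases x)
        case (real R)
        then have "limsup (\<lambda>n. eln (measure (Pn n) (E n)) * ereal (1 / real n)) \<le> ereal (- R)"
          using main2 x by simp
        then have "- ereal (- R) \<le> - limsup (\<lambda>n. eln (measure (Pn n) (E n)) * ereal (1 / real n))"
          by (simp only: ereal_minus_le_minus)
        then show ?thesis using real by simp
      next
        case PInf then show ?thesis using x by simp
      next
        case MInf then show ?thesis by simp
      qed
    qed
    then have "- (- limsup (\<lambda>n. eln (measure (Pn n) (E n)) * ereal (1 / real n))) \<le> - Hinf"
      by (simp only: ereal_minus_le_minus)
    then show ?thesis using INFeq by simp
  qed
  then show ?thesis unfolding Pn_def E_def S_def .
qed

end
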